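(* Let $F=L-N:X\to Y$ be of class $C^1$ and satisfy hypothesis (H). Let $u_0=u(z_0,t_0)\in X$, with $z_0\in H_Y$, $t_0\in\mathbb{R}$. Then $u_0$ is a critical point of $F$ (i.e. $DF(u_0):X\to Y$ is not invertible) if and only if $t_0$ is a critical point of the function $t\mapsto h(u(z_0,t))$, equivalently of $t\mapsto h^a(z_0,t)$.
   Context: Let $X,Y$ be real Hilbert spaces, $X$ densely included in $Y$, and let $L:X\subset Y\to Y$ be a self-adjoint operator, $X$ carrying the graph norm. Let $\lambda_p$ be a simple isolated eigenvalue of $L$ with eigenvector $\phi_p\in X$, $\|\phi_p\|_Y=1$. Let $V_X=V_Y=\langle\phi_p\rangle$ be its real span, $H_Y=\{y\in Y:\langle y,\phi_p\rangle_Y=0\}$, $H_X=X\cap H_Y$, and $P:Y\to H_Y$ the orthogonal projection. Let $N:Y\to Y$, $F=L-N:X\to Y$, and for $t\in\mathbb{R}$ let $PN_t:H_Y\to H_Y$, $PN_t(w)=PN(w+t\phi_p)$, and $PF_t:H_X\to H_Y$, $PF_t(w)=PF(w+t\phi_p)$. Hypothesis (H): there is $n\ge0$ such that every $PN_t$ is Lipschitz with constant $n$ independent of $t$, and $[-n,n]\cap\sigma(L)=\{\lambda_p\}$. Under (H) each $PF_t$ is a homeomorphism (a $C^1$ diffeomorphism if $F$ is $C^1$); for $z\in H_Y$, $t\in\mathbb{R}$ let $w(z,t)=(PF_t)^{-1}(z)$ and $u(z,t)=w(z,t)+t\phi_p$, so that $\{u(z,t):t\in\mathbb{R}\}=F^{-1}(z+V_Y)$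 is the fiber associated to $z$. The height function is $h:X\to\mathbb{R}$, $h(u)=\langle F(u),\phi_p\rangle_Y$, and the adapted height function is $h^a(z,t)=h(u(z,t))$, so that $F(u(z,t))=z+h^a(z,t)\phi_p$. *)

theory Defs
  imports "HOL-Analysis.Analysis"
begin

text \<open>X is a real Hilbert space (type 'x)
  carrying the graph norm of L, densely and injectively included in Y by the linear map
  incl. The (unbounded) operator L : X \<subseteq> Y \<rightarrow> Y is modelled by its restriction
  L :: 'x \<Rightarrow> 'y to its domain X.\<close>

definition graph_norm_setting :: "('x::real_inner \<Rightarrow> 'y::real_inner) \<Rightarrow> ('x \<Rightarrow> 'y) \<Rightarrow> bool" where
  "graph_norm_setting incl L \<longleftrightarrow>
     linear incl \<and> inj incl \<and> closure (range incl) = UNIV \<and> linear L \<and>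
     (\<forall>a b. inner a b = inner (incl a) (incl b) + inner (L a) (L b))"

text \<open>Self-adjointness: the adjoint L* (graph {(y,v). \<forall>a\<in>X. <L a, y> = <a, v>})
  coincides with L (graph {(incl b, L b)}).\<close>
definition self_adjoint_op :: "('x::real_inner \<Rightarrow> 'y::real_inner) \<Rightarrow> ('x \<Rightarrow> 'y) \<Rightarrow> bool" where
  "self_adjoint_op incl L \<longleftrightarrow>
     (\<forall>y v. (\<forall>a. inner (L a) y = inner (incl a) v) \<longleftrightarrow> (\<exists>b. y = incl b \<and> v = L b))"

text \<open>Spectrum of L: lam is in the resolvent set iff L - lam I : X \<rightarrow> Y is bijective
  with inverse bounded as an operator on Y.\<close>
definition op_spectrum :: "('x::real_inner \<Rightarrow> 'y::real_inner) \<Rightarrow> ('x \<Rightarrow> 'y) \<Rightarrow> real set" where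
  "op_spectrum incl L = {lam. \<not> (\<exists>R :: 'y \<Rightarrow> 'x.
      bounded_linear (\<lambda>y. incl (R y)) \<and>
      (\<forall>y. L (R y) - lam *\<^sub>R incl (R y) = y) \<and>
      (\<forall>a. R (L a - lam *\<^sub>R incl a) = a))}"

definition simple_isolated_eigenvalue ::
  "('x::real_inner \<Rightarrow> 'y::real_inner) \<Rightarrow> ('x \<Rightarrow> 'y) \<Rightarrow> real \<Rightarrow> 'x \<Rightarrow> bool" where
  "simple_isolated_eigenvalue incl L lam phi \<longleftrightarrow>
     L phi = lam *\<^sub>R incl phi \<and> norm (incl phi) = 1 \<and>
     (\<forall>a. L a = lam *\<^sub>R incl a \<longrightarrow> (\<exists>c. a = c *\<^sub>R phi)) \<and>
     (\<exists>e>0. \<forall>mu\<in>op_spectrum incl L. \<bar>mu - lam\<bar> < e \<longrightarrow> mu = lam)"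

definition HY :: "'y::real_inner \<Rightarrow> 'y set" where
  "HY phiY = {y. inner y phiY = 0}"

definition HX :: "('x \<Rightarrow> 'y::real_inner) \<Rightarrow> 'x \<Rightarrow> 'x set" where
  "HX incl phi = {a. inner (incl a) (incl phi) = 0}"

definition projP :: "'y::real_inner \<Rightarrow> 'y \<Rightarrow> 'y" where
  "projP phiY y = y - inner y phiY *\<^sub>R phiY"

definition Fop :: "('x \<Rightarrow> 'y) \<Rightarrow> ('x \<Rightarrow> 'y::real_vector) \<Rightarrow> ('y \<Rightarrow> 'y) \<Rightarrow> 'x \<Rightarrow> 'y" where
  "Fop incl L N a = L a - N (incl a)"

definition hypH :: "('x::real_inner \<Rightarrow> 'y::real_inner) \<Rightarrow> ('x \<Rightarrow> 'y) \<Rightarrow> ('y \<Rightarrow> 'y) \<Rightarrow> real \<Rightarrow> 'x \<Rightarrow> bool" where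
  "hypH incl L N lam phi \<longleftrightarrow>
     (\<exists>n\<ge>0. (\<forall>t::real. n-lipschitz_on (HY (incl phi))
                 (\<lambda>w. projP (incl phi) (N (w + t *\<^sub>R incl phi)))) \<and>
            {-n..n} \<inter> op_spectrum incl L = {lam})"

definition fiber_w :: "('x::real_vector \<Rightarrow> 'y::real_inner) \<Rightarrow> ('x \<Rightarrow> 'y) \<Rightarrow> ('y \<Rightarrow> 'y) \<Rightarrow> 'x \<Rightarrow> 'y \<Rightarrow> real \<Rightarrow> 'x" where
  "fiber_w incl L N phi z t =
     (THE w. w \<in> HX incl phi \<and> projP (incl phi) (Fop incl L N (w + t *\<^sub>R phi)) = z)"

definition fiber_u :: "('x::real_vector \<Rightarrow> 'y::real_inner) \<Rightarrow> ('x \<Rightarrow> 'y) \<Rightarrow> ('y \<Rightarrow> 'y) \<Rightarrow> 'x \<Rightarrow> 'y \<Rightarrow> real \<Rightarrow> 'x" where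
  "fiber_u incl L N phi z t = fiber_w incl L N phi z t + t *\<^sub>R phi"

definition height :: "('x \<Rightarrow> 'y::real_inner) \<Rightarrow> ('x \<Rightarrow> 'y) \<Rightarrow> ('y \<Rightarrow> 'y) \<Rightarrow> 'x \<Rightarrow> 'x \<Rightarrow> real" where
  "height incl L N phi a = inner (Fop incl L N a) (incl phi)"

definition adapted_height :: "('x::real_vector \<Rightarrow> 'y::real_inner) \<Rightarrow> ('x \<Rightarrow> 'y) \<Rightarrow> ('y \<Rightarrow> 'y) \<Rightarrow> 'x \<Rightarrow> 'y \<Rightarrow> real \<Rightarrow> real" where
  "adapted_height incl L N phi z t = height incl L N phi (fiber_u incl L N phi z t)"

definition invertible_op :: "('x::real_normed_vector \<Rightarrow>\<^sub>L 'y::real_normed_vector) \<Rightarrow> bool" where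
  "invertible_op T \<longleftrightarrow> (\<exists>S :: 'y \<Rightarrow>\<^sub>L 'x. (\<forall>a. S (T a) = a) \<and> (\<forall>y. T (S y) = y))"

end

theory Submission
  imports Defs
begin

definition apT :: "('y::real_normed_vector \<Rightarrow> 'y) \<Rightarrow> 'y set \<Rightarrow> real \<Rightarrow> bool" where
  "apT T H nu \<longleftrightarrow> (\<forall>\<epsilon>>0. \<exists>y\<in>H. norm y = 1 \<and> norm (T y - nu *\<^sub>R y) < \<epsilon>)"

lemma dichotomy:
  fixes P Q :: "real \<Rightarrow> bool"
  assumes all: "\<And>\<epsilon>. \<epsilon> > 0 \<Longrightarrow> P \<epsilon> \<or> Q \<epsilon>"
    and mP: "\<And>\<epsilon> \<epsilon>'. \<epsilon> \<le> \<epsilon>' \<Longrightarrow> P \<epsilon> \<Longrightarrow> P \<epsilon>'"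
    and mQ: "\<And>\<epsilon> \<epsilon>'. \<epsilon> \<le> \<epsilon>' \<Longrightarrow> Q \<epsilon> \<Longrightarrow> Q \<epsilon>'"
  shows "(\<forall>\<epsilon>>0. P \<epsilon>) \<or> (\<forall>\<epsilon>>0. Q \<epsilon>)"
proof (rule ccontr)
  assume "\<not> ?thesis"
  then obtain e1 e2 where e: "e1 > 0" "\<not> P e1" "e2 > 0" "\<not> Q e2" by auto
  have "P (min e1 e2) \<or> Q (min e1 e2)" using all e by auto
  then show False using mP mQ e by (meson min.cobounded1 min.cobounded2)
qed

lemma apT_mono_aux:
  "\<epsilon> \<le> \<epsilon>' \<Longrightarrow> (\<exists>y\<in>H. norm y = 1 \<and> norm (T y - nu *\<^sub>R y) < \<epsilon>)
     \<Longrightarrow> (\<exists>y\<in>H. norm y = 1 \<and> norm (T y - nu *\<^sub>R y) < \<epsilon>')"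
  by force

lemma norm_diff_sq:
  fixes a b :: "'a::real_inner"
  shows "(norm (a - b))^2 = (norm a)^2 - 2 * inner a b + (norm b)^2"
  unfolding power2_norm_eq_inner by (simp add: inner_diff_left inner_diff_right inner_commute)

lemma norm_add_sq:
  fixes a b :: "'a::real_inner"
  shows "(norm (a + b))^2 = (norm a)^2 + 2 * inner a b + (norm b)^2"
  unfolding power2_norm_eq_inner by (simp add: inner_add_left inner_add_right inner_commute)

lemma lemmaA:
  fixes T :: "'y::real_inner \<Rightarrow> 'y"
  assumes bl: "bounded_linear T" and sa: "\<And>y z. inner (T y) z = inner y (T z)"
    and sub: "subspace H" and inv: "\<And>y. y \<in> H \<Longrightarrow> T y \<in> H" and ne: "\<exists>y\<in>H. norm y = 1"
  obtains M where "M \<ge> 0" "\<And>y. y \<in> H \<Longrightarrow> norm (T y) \<le> M * norm y"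
    "\<And>\<epsilon>. \<epsilon> > 0 \<Longrightarrow> \<exists>y\<in>H. norm y = 1 \<and> M - \<epsilon> < norm (T y)"
    "apT T H M \<or> apT T H (-M)"
proof -
  interpret T: bounded_linear T by fact
  define S where "S = {norm (T y) | y. y \<in> H \<and> norm y = 1}"
  obtain K where K: "\<And>y. norm (T y) \<le> norm y * K" using T.bounded by blast
  have Sne: "S \<noteq> {}" using ne unfolding S_def by auto
  have Sbdd: "bdd_above S" unfolding S_def bdd_above_def using K by (intro exI[of _ K]) (auto, metis mult_1)
  define M where "M = Sup S"
  have up: "norm (T y) \<le> M" if "y \<in> H" "norm y = 1" for y
    unfolding M_def by (rule cSup_upper) (use that Sbdd S_def in auto)
  have M0: "M \<ge> 0" using ne up by (meson norm_ge_zero order.trans)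
  have bound: "norm (T y) \<le> M * norm y" if "y \<in> H" for y
  proof (cases "y = 0")
    case True then show ?thesis by simp
  next
    case False
    have "(1/norm y) *\<^sub>R y \<in> H" using sub that by (simp add: subspace_scale)
    moreover have "norm ((1/norm y) *\<^sub>R y) = 1" using False by simp
    ultimately have "norm (T ((1/norm y) *\<^sub>R y)) \<le> M" by (rule up)
    then have "norm (T y) / norm y \<le> M" by (simp add: T.scaleR divide_inverse_commute)
    then show ?thesis using False by (simp add: divide_le_eq mult.commute)
  qed
  have approx: "\<exists>y\<in>H. norm y = 1 \<and> M - \<epsilon> < norm (T y)" if "\<epsilon> > 0" for \<epsilon>
  proof -
    have "M - \<epsilon> < Sup S" using that M_def by simp
    then obtain x where "x \<in> S" "M - \<epsilon> < x" using less_cSup_iff[OF Sne Sbdd] by blast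
    then show ?thesis unfolding S_def by auto
  qed
  have main: "(\<exists>y\<in>H. norm y = 1 \<and> norm (T y - M *\<^sub>R y) < \<epsilon>) \<or>
              (\<exists>y\<in>H. norm y = 1 \<and> norm (T y - (-M) *\<^sub>R y) < \<epsilon>)" if ep: "\<epsilon> > 0" for \<epsilon>
  proof (cases "M = 0")
    case True
    obtain y where y: "y \<in> H" "norm y = 1" using ne by blast
    have "norm (T y) \<le> 0" using bound[OF y(1)] True by simp
    then show ?thesis using y ep True by auto
  next
    case False
    then have Mp: "M > 0" using M0 by simp
    define \<eta> where "\<eta> = \<epsilon>^4 / (4 * M^3)"
    have etap: "\<eta> > 0" unfolding \<eta>_def using Mp ep by simp
    obtain y where y: "y \<in> H" "norm y = 1" "M - \<eta> < norm (T y)" using approx[OF etap] by blast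
    define a where "a = norm (T y)"
    have aM: "a \<le> M" using bound[OF y(1)] y(2) a_def by simp
    have a0: "a \<ge> 0" using a_def by simp
    define w where "w = T (T y) - (M^2) *\<^sub>R y"
    have TTy: "norm (T (T y)) \<le> M * a" using bound[OF inv[OF y(1)]] a_def by simp
    have in1: "inner (T (T y)) y = a^2" using sa[of "T y" y] a_def by (simp add: power2_norm_eq_inner)
    have "(norm w)^2 = (norm (T (T y)))^2 - 2 * M^2 * inner (T (T y)) y + M^4"
      unfolding w_def norm_diff_sq using y(2)
      by (simp add: power2_eq_square power4_eq_xxxx)
    also have "\<dots> \<le> (M*a)^2 - 2 * M^2 * a^2 + M^4"
      using TTy in1 by (simp add: power_mono)
    also have "\<dots> = M^2 * (M - a) * (M + a)" by (simp add: algebra_simps power2_eq_square power4_eq_xxxx)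
    also have "\<dots> \<le> M^2 * \<eta> * (2*M)"
    proof -
      have "M - a \<le> \<eta>" using y(3) a_def by simp
      moreover have "M + a \<le> 2*M" using aM by simp
      ultimately show ?thesis using aM a0 Mp
        by (intro mult_mono) (auto intro: mult_left_mono)
    qed
    also have "\<dots> = \<epsilon>^4 / 2" unfolding \<eta>_def using Mp by (simp add: field_simps power3_eq_cube power2_eq_square)
    also have "\<dots> < \<epsilon>^4" using ep by simp
    finally have wsq: "(norm w)^2 < (\<epsilon>^2)^2" by (simp add: power_mult[symmetric])
    have wlt: "norm w < \<epsilon>^2" using wsq by (meson abs_le_square_iff linorder_not_le norm_ge_zero power2_less_imp_less zero_le_power2)
    define z where "z = T y + M *\<^sub>R y"
    show ?thesis
    proof (cases "norm z < \<epsilon>")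
      case True
      then show ?thesis using y by (intro disjI2 bexI[of _ y]) (auto simp: z_def)
    next
      case False
      then have zn: "norm z \<ge> \<epsilon>" by simp
      have zH: "z \<in> H" unfolding z_def using sub inv y(1) by (simp add: subspace_add subspace_scale)
      define zz where "zz = (1/norm z) *\<^sub>R z"
      have zzH: "zz \<in> H" unfolding zz_def using sub zH by (simp add: subspace_scale)
      have zz1: "norm zz = 1" unfolding zz_def using zn ep by (subgoal_tac "z \<noteq> 0") auto
      have Tz: "T z - M *\<^sub>R z = w" unfolding z_def w_def by (simp add: T.add T.scaleR algebra_simps power2_eq_square)
      have "T zz - M *\<^sub>R zz = (1/norm z) *\<^sub>R (T z - M *\<^sub>R z)" unfolding zz_def
        by (simp add: T.scaleR scaleR_right_diff_distrib)
      then have "T zz - M *\<^sub>R zz = (1/norm z) *\<^sub>R w" using Tz by simp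
      then have "norm (T zz - M *\<^sub>R zz) = norm w / norm z" by simp
      also have "\<dots> \<le> norm w / \<epsilon>" using zn ep by (simp add: frac_le)
      also have "\<dots> < \<epsilon>" using wlt ep by (simp add: divide_less_eq power2_eq_square)
      finally show ?thesis using zzH zz1 by blast
    qed
  qed
  have "(\<forall>\<epsilon>>0. \<exists>y\<in>H. norm y = 1 \<and> norm (T y - M *\<^sub>R y) < \<epsilon>) \<or>
        (\<forall>\<epsilon>>0. \<exists>y\<in>H. norm y = 1 \<and> norm (T y - (-M) *\<^sub>R y) < \<epsilon>)"
    by (rule dichotomy[OF main]) (assumption | rule apT_mono_aux; assumption)+
  then have "apT T H M \<or> apT T H (-M)" unfolding apT_def by blast
  then show ?thesis using that M0 bound approx by blast
qed

lemma ap_conv: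
  fixes Q :: "'y::real_normed_vector \<Rightarrow> 'x::real_vector" and B J :: "'x \<Rightarrow> 'y"
  assumes lB: "linear B" and lJ: "linear J" and BQ: "\<And>y. B (Q y) = y"
    and QH: "\<And>y. y \<in> H \<Longrightarrow> Q y \<in> HX'" and scX: "\<And>c a. a \<in> HX' \<Longrightarrow> c *\<^sub>R a \<in> HX'"
    and ap: "\<And>\<epsilon>. \<epsilon> > 0 \<Longrightarrow> \<exists>y\<in>H. norm y = 1 \<and> norm (J (Q y) - nu *\<^sub>R y) < \<epsilon>"
    and nu: "nu \<noteq> 0" and ep: "\<epsilon> > 0"
  shows "\<exists>a\<in>HX'. norm (J a) = 1 \<and> norm (B a - (1/nu) *\<^sub>R J a) < \<epsilon>"
proof -
  interpret B: linear B by fact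
  interpret J: linear J by fact
  define \<eta> where "\<eta> = min (\<bar>nu\<bar>/2) (\<epsilon>*nu^2/2)"
  have etap: "\<eta> > 0" unfolding \<eta>_def using nu ep by simp
  obtain y where y: "y \<in> H" "norm y = 1" "norm (J (Q y) - nu *\<^sub>R y) < \<eta>" using ap[OF etap] by blast
  define k where "k = norm (J (Q y))"
  have "norm (nu *\<^sub>R y) - norm (J (Q y)) \<le> norm (nu *\<^sub>R y - J (Q y))"
    by (rule norm_triangle_ineq2)
  then have "norm (nu *\<^sub>R y) \<le> norm (J (Q y)) + norm (J (Q y) - nu *\<^sub>R y)"
    by (simp add: norm_minus_commute)
  then have kb: "k > \<bar>nu\<bar>/2" using y(2,3) unfolding k_def \<eta>_def by simp
  then have kp: "k > 0" using nu by simp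
  define a where "a = (1/k) *\<^sub>R Q y"
  have aH: "a \<in> HX'" unfolding a_def using QH[OF y(1)] scX by simp
  have Ja: "J a = (1/k) *\<^sub>R J (Q y)" unfolding a_def by (simp add: J.scale)
  have Ja1: "norm (J a) = 1" using Ja kp k_def by simp
  have "B a - (1/nu) *\<^sub>R J a = (1/k) *\<^sub>R (y - (1/nu) *\<^sub>R J (Q y))"
    unfolding a_def by (simp add: B.scale J.scale BQ scaleR_right_diff_distrib)
  also have "\<dots> = (- 1/(k*nu)) *\<^sub>R (J (Q y) - nu *\<^sub>R y)"
    using nu kp by (simp add: scaleR_right_diff_distrib algebra_simps)
  finally have "norm (B a - (1/nu) *\<^sub>R J a) = norm (J (Q y) - nu *\<^sub>R y) / (k * \<bar>nu\<bar>)"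
    using kp by (simp add: abs_mult)
  also have "\<dots> < \<eta> / (k * \<bar>nu\<bar>)" using y(3) kp nu by (simp add: divide_strict_right_mono)
  also have "\<dots> \<le> (\<epsilon>*nu^2/2) / ((\<bar>nu\<bar>/2) * \<bar>nu\<bar>)"
  proof (rule frac_le)
    show "0 \<le> \<epsilon>*nu^2/2" using ep by simp
    show "\<eta> \<le> \<epsilon>*nu^2/2" unfolding \<eta>_def by simp
    have nn: "\<bar>nu\<bar> > 0" using nu by simp
    then show "0 < \<bar>nu\<bar>/2 * \<bar>nu\<bar>" by (intro mult_pos_pos) auto
    show "\<bar>nu\<bar>/2 * \<bar>nu\<bar> \<le> k * \<bar>nu\<bar>" using kb nn by (intro mult_right_mono) auto
  qed
  also have "\<dots> = \<epsilon>"
  proof -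
    have "nu^2 = \<bar>nu\<bar> * \<bar>nu\<bar>" by (simp add: power2_eq_square)
    then show ?thesis using nu by simp
  qed
  finally show ?thesis using aH Ja1 by blast
qed


locale spec =
  fixes incl :: "'x::{real_inner,complete_space} \<Rightarrow> 'y::{real_inner,complete_space}"
    and L :: "'x \<Rightarrow> 'y" and lam :: real and phi :: 'x and n :: real and e :: real
  assumes lin_incl: "linear incl" and inj_incl: "inj incl" and lin_L: "linear L"
    and graph: "\<And>a b. inner a b = inner (incl a) (incl b) + inner (L a) (L b)"
    and symm: "\<And>a b. inner (L a) (incl b) = inner (incl a) (L b)"
    and eigv: "L phi = lam *\<^sub>R incl phi" and phin: "norm (incl phi) = 1"
    and simple: "\<And>a. L a = lam *\<^sub>R incl a \<Longrightarrow> \<exists>c. a = c *\<^sub>R phi"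
    and e_pos: "e > 0" and iso: "\<And>mu. mu \<in> op_spectrum incl L \<Longrightarrow> \<bar>mu - lam\<bar> < e \<Longrightarrow> mu = lam"
    and n_nonneg: "n \<ge> 0" and gapn: "{-n..n} \<inter> op_spectrum incl L = {lam}"
begin

abbreviation "ph \<equiv> incl phi"
abbreviation "HYs \<equiv> HY ph"
abbreviation "HXs \<equiv> HX incl phi"

lemma incl_lin: "incl (a + b) = incl a + incl b" "incl (c *\<^sub>R a) = c *\<^sub>R incl a"
  "incl (a - b) = incl a - incl b" "incl 0 = 0" "incl (- a) = - incl a"
  using lin_incl by (auto simp: linear_add linear_scale linear_diff linear_0 linear_neg)

lemma L_lin: "L (a + b) = L a + L b" "L (c *\<^sub>R a) = c *\<^sub>R L a"
  "L (a - b) = L a - L b" "L 0 = 0" "L (- a) = - L a"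
  using lin_L by (auto simp: linear_add linear_scale linear_diff linear_0 linear_neg)

lemma normsq: "(norm a)^2 = (norm (incl a))^2 + (norm (L a))^2"
  using graph[of a a] by (simp add: power2_norm_eq_inner)

lemma norm_incl_le: "norm (incl a) \<le> norm a"
proof -
  have "(norm (incl a))^2 \<le> (norm a)^2" using normsq[of a] by simp
  then show ?thesis by (rule power2_le_imp_le) simp
qed

lemma norm_L_le: "norm (L a) \<le> norm a"
proof -
  have "(norm (L a))^2 \<le> (norm a)^2" using normsq[of a] by simp
  then show ?thesis by (rule power2_le_imp_le) simp
qed

lemma norm_le_sum: "norm a \<le> norm (incl a) + norm (L a)"
proof -
  have "(norm a)^2 \<le> (norm (incl a) + norm (L a))^2" using normsq[of a]
    by (simp add: power2_sum)
  then show ?thesis by (rule power2_le_imp_le) simp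
qed

lemma bl_incl: "bounded_linear incl"
  by (rule bounded_linear_intro[of _ 1]) (auto simp: incl_lin norm_incl_le)

lemma bl_L: "bounded_linear L"
  by (rule bounded_linear_intro[of _ 1]) (auto simp: L_lin norm_L_le)

lemma subspace_HY: "subspace HYs"
  unfolding subspace_def HY_def by (simp add: inner_add_left)

lemma closed_HY: "closed HYs"
proof -
  have "HYs = {y. inner ph y = 0}" unfolding HY_def by (auto simp: inner_commute)
  then show ?thesis by (simp add: closed_hyperplane)
qed

lemma HY_iff: "y \<in> HYs \<longleftrightarrow> inner y ph = 0" unfolding HY_def by simp
lemma HX_iff: "a \<in> HXs \<longleftrightarrow> incl a \<in> HYs" unfolding HY_def HX_def by simp

lemma HX_scale: "a \<in> HXs \<Longrightarrow> c *\<^sub>R a \<in> HXs"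
  unfolding HX_def by (simp add: incl_lin)

lemma HX_add: "a \<in> HXs \<Longrightarrow> b \<in> HXs \<Longrightarrow> a + b \<in> HXs"
  unfolding HX_def by (simp add: incl_lin inner_add_left)

lemma HX_diff: "a \<in> HXs \<Longrightarrow> b \<in> HXs \<Longrightarrow> a - b \<in> HXs"
  unfolding HX_def by (simp add: incl_lin inner_diff_left)

lemma HY_add: "a \<in> HYs \<Longrightarrow> b \<in> HYs \<Longrightarrow> a + b \<in> HYs"
  and HY_diff: "a \<in> HYs \<Longrightarrow> b \<in> HYs \<Longrightarrow> a - b \<in> HYs"
  and HY_scale: "a \<in> HYs \<Longrightarrow> c *\<^sub>R a \<in> HYs"
  and HY_0: "0 \<in> HYs"
  unfolding HY_def by (auto simp: inner_add_left inner_diff_left)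

lemma phph: "inner ph ph = 1" using phin by (simp add: power2_norm_eq_inner[symmetric])

lemma L_HX: "a \<in> HXs \<Longrightarrow> L a \<in> HYs"
  unfolding HX_def HY_def using symm[of a phi] eigv by (simp add: inner_commute)

definition res :: "real \<Rightarrow> ('y \<Rightarrow> 'x) \<Rightarrow> bool" where
  "res mu R \<longleftrightarrow> bounded_linear (\<lambda>y. incl (R y)) \<and>
      (\<forall>y. L (R y) - mu *\<^sub>R incl (R y) = y) \<and> (\<forall>a. R (L a - mu *\<^sub>R incl a) = a)"

lemma spec_iff: "mu \<notin> op_spectrum incl L \<longleftrightarrow> (\<exists>R. res mu R)"
  unfolding op_spectrum_def res_def by simp

lemma res_H:
  assumes "res mu R" "mu \<noteq> lam" "y \<in> HYs" shows "R y \<in> HXs"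
proof -
  have e1: "L (R y) - mu *\<^sub>R incl (R y) = y" using assms(1) unfolding res_def by simp
  have "0 = inner y ph" using assms(3) unfolding HY_def by simp
  also have "\<dots> = inner (L (R y)) ph - mu * inner (incl (R y)) ph"
    using e1 by (metis inner_diff_left inner_scaleR_left)
  also have "\<dots> = (lam - mu) * inner (incl (R y)) ph"
    using symm[of "R y" phi] eigv by (simp add: algebra_simps)
  finally show ?thesis using assms(2) unfolding HX_def by simp
qed

lemma res_sa:
  assumes "res mu R" shows "inner (incl (R y)) z = inner y (incl (R z))"
proof -
  have e1: "\<And>y. L (R y) - mu *\<^sub>R incl (R y) = y" using assms(1) unfolding res_def by simp
  have "inner (incl (R y)) z = inner (incl (R y)) (L (R z)) - mu * inner (incl (R y)) (incl (R z))"
    by (subst e1[of z, symmetric]) (simp add: inner_diff_right)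
  also have "\<dots> = inner (L (R y)) (incl (R z)) - mu * inner (incl (R y)) (incl (R z))"
    using symm by simp
  also have "\<dots> = inner y (incl (R z))"
    by (subst (3) e1[of y, symmetric]) (simp add: inner_diff_left)
  finally show ?thesis .
qed


lemma res_eqs:
  assumes "res mu R"
  shows "\<And>y. L (R y) - mu *\<^sub>R incl (R y) = y" "\<And>a. R (L a - mu *\<^sub>R incl a) = a"
    "bounded_linear (\<lambda>y. incl (R y))"
  using assms unfolding res_def by auto

lemma res_lin:
  assumes "res mu R" shows "R (y1 + y2) = R y1 + R y2" "R (c *\<^sub>R y) = c *\<^sub>R R y"
proof -
  note e = res_eqs[OF assms]
  have "L (R y1 + R y2) - mu *\<^sub>R incl (R y1 + R y2)
        = (L (R y1) - mu *\<^sub>R incl (R y1)) + (L (R y2) - mu *\<^sub>R incl (R y2))"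
    by (simp add: L_lin incl_lin algebra_simps)
  also have "\<dots> = y1 + y2" by (simp add: e(1))
  finally have "R (y1 + y2) = R (L (R y1 + R y2) - mu *\<^sub>R incl (R y1 + R y2))" by simp
  then show "R (y1 + y2) = R y1 + R y2" using e(2) by simp
  have "L (c *\<^sub>R R y) - mu *\<^sub>R incl (c *\<^sub>R R y) = c *\<^sub>R (L (R y) - mu *\<^sub>R incl (R y))"
    by (simp add: L_lin incl_lin algebra_simps)
  also have "\<dots> = c *\<^sub>R y" by (simp add: e(1))
  finally have "R (c *\<^sub>R y) = R (L (c *\<^sub>R R y) - mu *\<^sub>R incl (c *\<^sub>R R y))" by simp
  then show "R (c *\<^sub>R y) = c *\<^sub>R R y" using e(2) by simp
qed

lemma res_bl:
  assumes "res mu R" shows "bounded_linear R"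
proof -
  note e = res_eqs[OF assms]
  interpret T: bounded_linear "\<lambda>y. incl (R y)" by (rule e(3))
  obtain K where K: "\<And>y. norm (incl (R y)) \<le> norm y * K" "K \<ge> 0"
    using T.nonneg_bounded by blast
  have b: "norm (R y) \<le> norm y * (1 + (1 + \<bar>mu\<bar>) * K)" for y
  proof -
    have Ly: "L (R y) = y + mu *\<^sub>R incl (R y)" using e(1)[of y] by (simp add: algebra_simps)
    have "norm (R y) \<le> norm (incl (R y)) + norm (L (R y))" by (rule norm_le_sum)
    also have "\<dots> \<le> norm (incl (R y)) + (norm y + \<bar>mu\<bar> * norm (incl (R y)))"
      unfolding Ly using norm_triangle_ineq[of y "mu *\<^sub>R incl (R y)"] by simp
    also have "\<dots> = norm y + (1 + \<bar>mu\<bar>) * norm (incl (R y))" by (simp add: algebra_simps)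
    also have "\<dots> \<le> norm y + (1 + \<bar>mu\<bar>) * (norm y * K)"
      using K(1)[of y] by (intro add_left_mono mult_left_mono) auto
    finally show ?thesis by (simp add: algebra_simps)
  qed
  show ?thesis by (rule bounded_linear_intro[OF _ _ b]) (auto simp: res_lin[OF assms])
qed

lemma res_ident:
  assumes "res mu R" "res s R'"
  shows "incl (R' y) = incl (R y) + (s - mu) *\<^sub>R incl (R (incl (R' y)))"
proof -
  note e = res_eqs[OF assms(1)] and e' = res_eqs[OF assms(2)]
  have "L (R' y) - mu *\<^sub>R incl (R' y) = (L (R' y) - s *\<^sub>R incl (R' y)) + (s - mu) *\<^sub>R incl (R' y)"
    by (simp add: algebra_simps)
  also have "\<dots> = y + (s - mu) *\<^sub>R incl (R' y)" by (simp add: e'(1))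
  finally have "R' y = R (y + (s - mu) *\<^sub>R incl (R' y))" using e(2)[of "R' y"] by simp
  also have "\<dots> = R y + (s - mu) *\<^sub>R R (incl (R' y))" by (simp add: res_lin[OF assms(1)])
  finally have "incl (R' y) = incl (R y + (s - mu) *\<^sub>R R (incl (R' y)))" by (rule arg_cong)
  then show ?thesis by (simp only: incl_lin)
qed

definition apH :: "real \<Rightarrow> bool" where
  "apH s \<longleftrightarrow> (\<forall>\<epsilon>>0. \<exists>a\<in>HXs. norm (incl a) = 1 \<and> norm (L a - s *\<^sub>R incl a) < \<epsilon>)"

lemma apH_spec: assumes "apH s" shows "s \<in> op_spectrum incl L"
proof (rule ccontr)
  assume "s \<notin> op_spectrum incl L"
  then obtain R where r: "res s R" using spec_iff by blast
  note e = res_eqs[OF r]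
  interpret T: bounded_linear "\<lambda>y. incl (R y)" by (rule e(3))
  obtain K where K: "\<And>y. norm (incl (R y)) \<le> norm y * K" "K > 0" using T.pos_bounded by blast
  obtain a where a: "norm (incl a) = 1" "norm (L a - s *\<^sub>R incl a) < 1/K"
    using assms K(2) unfolding apH_def by (meson zero_less_divide_1_iff)
  have "1 = norm (incl (R (L a - s *\<^sub>R incl a)))" using a(1) e(2) by simp
  also have "\<dots> \<le> norm (L a - s *\<^sub>R incl a) * K" by (rule K(1))
  also have "\<dots> < (1/K) * K" using a(2) K(2) by (intro mult_strict_right_mono) auto
  also have "\<dots> = 1" using K(2) by simp
  finally show False by simp
qed

lemma convL:
  assumes r: "res mu R" and ml: "mu \<noteq> lam" and ap: "apT (\<lambda>y. incl (R y)) HYs nu" and nu: "nu \<noteq> 0"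
  shows "apH (mu + 1/nu)"
  unfolding apH_def
proof (intro allI impI)
  fix \<epsilon> :: real assume ep: "\<epsilon> > 0"
  note e = res_eqs[OF r]
  have lB: "linear (\<lambda>a. L a - mu *\<^sub>R incl a)"
    by (rule linearI) (simp_all add: L_lin incl_lin algebra_simps)
  have "\<exists>a\<in>HXs. norm (incl a) = 1 \<and> norm ((L a - mu *\<^sub>R incl a) - (1/nu) *\<^sub>R incl a) < \<epsilon>"
  proof (rule ap_conv[where Q=R and H=HYs, OF lB lin_incl])
    show "\<And>y. L (R y) - mu *\<^sub>R incl (R y) = y" by (rule e(1))
    show "\<And>y. y \<in> HYs \<Longrightarrow> R y \<in> HXs" using res_H[OF r ml] by blast
    show "\<And>c a. a \<in> HXs \<Longrightarrow> c *\<^sub>R a \<in> HXs" by (rule HX_scale)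
    show "\<And>\<epsilon>. 0 < \<epsilon> \<Longrightarrow> \<exists>y\<in>HYs. norm y = 1 \<and> norm (incl (R y) - nu *\<^sub>R y) < \<epsilon>"
      using ap unfolding apT_def by blast
  qed (use nu ep in auto)
  then show "\<exists>a\<in>HXs. norm (incl a) = 1 \<and> norm (L a - (mu + 1 / nu) *\<^sub>R incl a) < \<epsilon>"
    by (simp add: algebra_simps)
qed

lemma lam_in: "lam \<in> {-n..n}" "lam \<in> op_spectrum incl L"
proof -
  have "lam \<in> {-n..n} \<inter> op_spectrum incl L" using gapn by simp
  then show "lam \<in> {-n..n}" "lam \<in> op_spectrum incl L" by (rule IntD1, rule IntD2)
qed

lemma gap_out: "x \<in> {-n..n} \<Longrightarrow> x \<noteq> lam \<Longrightarrow> x \<notin> op_spectrum incl L"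
proof
  assume "x \<in> {-n..n}" "x \<noteq> lam" "x \<in> op_spectrum incl L"
  then have "x \<in> {-n..n} \<inter> op_spectrum incl L" by (intro IntI)
  then show False using gapn \<open>x \<noteq> lam\<close> by simp
qed

lemma admissible:
  assumes "\<epsilon> > 0" shows "\<exists>mu. \<bar>mu\<bar> < \<epsilon> \<and> mu \<noteq> lam \<and> mu \<notin> op_spectrum incl L"
proof (cases "n > 0")
  case True
  define m where "m = min n (\<epsilon>/2)"
  have m: "m > 0" "m \<le> n" "m < \<epsilon>" unfolding m_def using True assms by auto
  show ?thesis
  proof (cases "m = lam")
    case False
    then show ?thesis using m gap_out[of m] by (intro exI[of _ m]) auto
  next
    case True
    then have "-m \<noteq> lam" using m by simp
    then show ?thesis using m gap_out[of "-m"] by (intro exI[of _ "-m"]) auto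
  qed
next
  case False
  then have n0: "n = 0" using n_nonneg by simp
  then have l0: "lam = 0" using lam_in by simp
  define m where "m = min e \<epsilon> / 2"
  have m: "m > 0" "m < e" "m < \<epsilon>" unfolding m_def using e_pos assms by auto
  have "m \<notin> op_spectrum incl L" using iso[of m] m l0 by auto
  then show ?thesis using m l0 by (intro exI[of _ m]) auto
qed

lemma specA:
  assumes r: "res mu R" and ml: "mu \<noteq> lam" and ne: "\<exists>y\<in>HYs. norm y = 1"
  obtains M where "M \<ge> 0" "\<And>y. y \<in> HYs \<Longrightarrow> norm (incl (R y)) \<le> M * norm y"
    "M > 0 \<Longrightarrow> apH (mu + 1/M) \<or> apH (mu - 1/M)"
proof -
  note e = res_eqs[OF r]
  obtain M where M: "M \<ge> 0" "\<And>y. y \<in> HYs \<Longrightarrow> norm (incl (R y)) \<le> M * norm y"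
    "apT (\<lambda>y. incl (R y)) HYs M \<or> apT (\<lambda>y. incl (R y)) HYs (-M)"
  proof (rule lemmaA[OF e(3) res_sa[OF r] subspace_HY _ ne])
    show "\<And>y. y \<in> HYs \<Longrightarrow> incl (R y) \<in> HYs" using res_H[OF r ml] HX_iff by blast
  qed auto
  have "apH (mu + 1/M) \<or> apH (mu - 1/M)" if "M > 0"
    using M(3) convL[OF r ml, of M] convL[OF r ml, of "-M"] that by auto
  then show ?thesis using that M by blast
qed

end


lemma (in spec) invT:
  assumes r: "res mu R" and r': "res s R'" and sm: "s \<noteq> mu"
  shows "(-(s - mu)) *\<^sub>R ((incl (R y) - (1/(s-mu)) *\<^sub>R y) + (s - mu) *\<^sub>R incl (R' (incl (R y) - (1/(s-mu)) *\<^sub>R y))) = y"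
    "incl (R ((-(s - mu)) *\<^sub>R (y + (s - mu) *\<^sub>R incl (R' y))))
       - (1/(s-mu)) *\<^sub>R ((-(s - mu)) *\<^sub>R (y + (s - mu) *\<^sub>R incl (R' y))) = y"
proof -
  define d where "d = s - mu"
  have d0: "d \<noteq> 0" using sm d_def by simp
  define T where "T = (\<lambda>y. incl (R y))"
  define T' where "T' = (\<lambda>y. incl (R' y))"
  interpret T: bounded_linear T unfolding T_def by (rule res_eqs(3)[OF r])
  interpret T': bounded_linear T' unfolding T'_def by (rule res_eqs(3)[OF r'])
  have id1: "\<And>y. T' y = T y + d *\<^sub>R T (T' y)" unfolding T_def T'_def d_def by (rule res_ident[OF r r'])
  have id2: "\<And>y. T y = T' y + (mu - s) *\<^sub>R T' (T y)" unfolding T_def T'_def by (rule res_ident[OF r' r])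
  have id2': "\<And>y. d *\<^sub>R T' (T y) = T' y - T y" using id2 unfolding d_def by (simp add: algebra_simps)
  have id1': "\<And>y. d *\<^sub>R T (T' y) = T' y - T y" using id1 by (simp add: algebra_simps)
  have "(-d) *\<^sub>R ((T y - (1/d) *\<^sub>R y) + d *\<^sub>R T' (T y - (1/d) *\<^sub>R y))
      = (-d) *\<^sub>R (T y - (1/d) *\<^sub>R y + d *\<^sub>R T' (T y) - T' y)"
    using d0 by (simp add: T'.diff T'.scaleR algebra_simps)
  also have "\<dots> = (-d) *\<^sub>R (T y - (1/d) *\<^sub>R y + (T' y - T y) - T' y)" by (simp only: id2')
  also have "\<dots> = y" using d0 by (simp add: algebra_simps)
  finally show "(-(s - mu)) *\<^sub>R ((incl (R y) - (1/(s-mu)) *\<^sub>R y) + (s - mu) *\<^sub>R incl (R' (incl (R y) - (1/(s-mu)) *\<^sub>R y))) = y"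
    unfolding d_def T_def T'_def .
  have "T ((-d) *\<^sub>R (y + d *\<^sub>R T' y)) - (1/d) *\<^sub>R ((-d) *\<^sub>R (y + d *\<^sub>R T' y))
      = (-d) *\<^sub>R (T y + d *\<^sub>R T (T' y)) + (y + d *\<^sub>R T' y)"
    using d0 by (simp add: T.add T.scaleR T.neg T.diff algebra_simps)
  also have "\<dots> = (-d) *\<^sub>R (T y + (T' y - T y)) + (y + d *\<^sub>R T' y)" by (simp only: id1')
  also have "\<dots> = y" by (simp add: algebra_simps)
  finally show "incl (R ((-(s - mu)) *\<^sub>R (y + (s - mu) *\<^sub>R incl (R' y))))
       - (1/(s-mu)) *\<^sub>R ((-(s - mu)) *\<^sub>R (y + (s - mu) *\<^sub>R incl (R' y))) = y"
    unfolding d_def T_def T'_def .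
qed


lemma gap_real_aux:
  fixes ss nu :: real assumes ss: "ss > 0" and ne: "nu \<noteq> -1/ss" and lt: "\<bar>nu - (-1/ss)\<bar> < 1/(2 * ss)"
  shows "nu < 0" "1/nu \<noteq> -ss" "1/nu > -2 * ss" "1/nu < -2 * ss/3"
proof -
  have lo: "nu > -1/ss - 1/(2 * ss)" and hi: "nu < -1/ss + 1/(2 * ss)" using lt by (auto simp: abs_less_iff)
  have e1: "-1/ss + 1/(2 * ss) = -1/(2 * ss)" using ss by (simp add: field_simps)
  have e2: "-1/ss - 1/(2 * ss) = -3/(2 * ss)" using ss by (simp add: field_simps)
  have hi': "nu < -1/(2 * ss)" using hi e1 by simp
  have lo': "nu > -3/(2 * ss)" using lo e2 by simp
  have "-1/(2 * ss) < 0" using ss by simp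
  then show nn: "nu < 0" using hi' by linarith
  have "nu * (2 * ss) < -1" using hi' ss by (simp add: field_simps)
  then show "1/nu > -2 * ss" using nn ss by (simp add: field_simps)
  have "nu * (2 * ss) > -3" using lo' ss by (simp add: field_simps)
  then show "1/nu < -2 * ss/3" using nn ss by (simp add: field_simps)
  show "1/nu \<noteq> -ss"
  proof
    assume "1/nu = -ss"
    then have "nu = -1/ss" using nn ss by (simp add: field_simps)
    then show False using ne by simp
  qed
qed

locale sB = spec +
  fixes R :: "'b \<Rightarrow> 'a"
  assumes r: "res (lam + e/2) R"
begin

abbreviation "sg \<equiv> e/2"
abbreviation "mu \<equiv> lam + e/2"
definition "T = (\<lambda>y. incl (R y))"
definition cc :: real where "cc = -1/sg"
definition gg :: real where "gg = 1/(2* sg)"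

lemma s_pos: "sg > 0" using e_pos by simp

interpretation T: bounded_linear T unfolding T_def by (rule res_eqs(3)[OF r])

lemma T_lin: "T (a + b) = T a + T b" "T (a - b) = T a - T b" "T (k *\<^sub>R a) = k *\<^sub>R T a" "T (- a) = - T a"
  "T 0 = 0"
  by (auto simp: T.add T.diff T.scaleR T.neg T.zero)

lemma T_sa: "inner (T y) z = inner y (T z)" unfolding T_def by (rule res_sa[OF r])

lemma T_HY: "y \<in> HYs \<Longrightarrow> T y \<in> HYs"
  unfolding T_def using res_H[OF r] HX_iff e_pos by simp

lemma gap_real:
  assumes "nu \<noteq> cc" "\<bar>nu - cc\<bar> < gg"
  shows "nu < 0" "mu + 1/nu \<noteq> lam" "\<bar>(mu + 1/nu) - lam\<bar> < e" "1/nu \<noteq> 0"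
proof -
  note a = gap_real_aux[OF s_pos, of nu]
  have h1: "nu \<noteq> -1/sg" using assms(1) unfolding cc_def .
  have h2: "\<bar>nu - (-1/sg)\<bar> < 1/(2 * sg)" using assms(2) unfolding cc_def gg_def .
  note b = a[OF h1 h2]
  show "nu < 0" by (rule b(1))
  then show "1/nu \<noteq> 0" by simp
  show "mu + 1/nu \<noteq> lam" using b(2) by simp
  show "\<bar>(mu + 1/nu) - lam\<bar> < e" using b(3) b(4) e_pos by (simp add: abs_less_iff)
qed

lemma inv_gap:
  assumes "nu \<noteq> cc" "\<bar>nu - cc\<bar> < gg"
  obtains Q where "bounded_linear Q" "\<And>y. Q (T y - nu *\<^sub>R y) = y" "\<And>y. T (Q y) - nu *\<^sub>R Q y = y"
    "\<And>y. y \<in> HYs \<Longrightarrow> Q y \<in> HYs" "\<And>y z. inner (Q y) z = inner y (Q z)"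
proof -
  note gr = gap_real[OF assms]
  define s' where "s' = mu + 1/nu"
  have "s' \<notin> op_spectrum incl L" using iso[of s'] gr unfolding s'_def by auto
  then obtain R' where r': "res s' R'" using spec_iff by blast
  have sm: "s' \<noteq> mu" using gr unfolding s'_def by simp
  have nud: "1/(s' - mu) = nu" unfolding s'_def by simp
  define Q where "Q = (\<lambda>y. (-(s' - mu)) *\<^sub>R (y + (s' - mu) *\<^sub>R incl (R' y)))"
  note iv = invT[OF r r' sm]
  have Q1: "Q (T y - nu *\<^sub>R y) = y" for y using iv(1)[of y] unfolding Q_def T_def nud .
  have Q2: "T (Q y) - nu *\<^sub>R Q y = y" for y using iv(2)[of y] unfolding Q_def T_def nud .
  interpret T': bounded_linear "\<lambda>y. incl (R' y)" by (rule res_eqs(3)[OF r'])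
  have blQ: "bounded_linear Q" unfolding Q_def
    by (intro bounded_linear_const_scaleR bounded_linear_add bounded_linear_ident
        T'.bounded_linear_axioms)
  have s'l: "s' \<noteq> lam" using gr unfolding s'_def by simp
  have QH: "Q y \<in> HYs" if "y \<in> HYs" for y
    unfolding Q_def using res_H[OF r' s'l that] HX_iff that by (intro HY_scale HY_add) auto
  have Qsa: "inner (Q y) z = inner y (Q z)" for y z
    unfolding Q_def using res_sa[OF r', of y z]
    by (simp add: inner_add_left inner_add_right algebra_simps)
  show ?thesis using that blQ Q1 Q2 QH Qsa by blast
qed

lemma lb_gap:
  assumes "nu \<noteq> cc" "\<bar>nu - cc\<bar> < gg"
  obtains C where "C > 0" "\<And>y. norm y \<le> C * norm (T y - nu *\<^sub>R y)"
proof -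
  obtain Q where Q: "bounded_linear Q" "\<And>y. Q (T y - nu *\<^sub>R y) = y"
    using inv_gap[OF assms] by metis
  obtain K where K: "\<And>x. norm (Q x) \<le> norm x * K" "K > 0" using bounded_linear.pos_bounded[OF Q(1)] by blast
  have "norm y \<le> K * norm (T y - nu *\<^sub>R y)" for y using K(1)[of "T y - nu *\<^sub>R y"] Q(2)[of y]
    by (simp add: mult.commute)
  then show ?thesis using that K(2) by blast
qed

definition D :: "'b \<Rightarrow> 'b" where "D y = T y - cc *\<^sub>R y"

lemma D_lin: "D (a + b) = D a + D b" "D (a - b) = D a - D b" "D (k *\<^sub>R a) = k *\<^sub>R D a" "D 0 = 0"
  unfolding D_def by (auto simp: T_lin algebra_simps)

lemma bl_D: "bounded_linear D"
proof -
  have "bounded_linear (\<lambda>y. T y - cc *\<^sub>R y)"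
    by (intro bounded_linear_sub T.bounded_linear_axioms bounded_linear_scaleR_right)
  then show ?thesis unfolding D_def[abs_def] .
qed

lemma D_sa: "inner (D y) z = inner y (D z)"
  unfolding D_def by (simp add: inner_diff_left inner_diff_right T_sa)

lemma D_HY: "y \<in> HYs \<Longrightarrow> D y \<in> HYs"
  unfolding D_def by (intro HY_diff HY_scale T_HY)

lemma DD_inner: "inner (D (D y)) y = (norm (D y))^2"
  by (simp add: D_sa power2_norm_eq_inner)

lemma factor:
  assumes "a + b = 2 * cc"
  shows "T (T y - b *\<^sub>R y) - a *\<^sub>R (T y - b *\<^sub>R y) = D (D y) - (cc^2 - a * b) *\<^sub>R y"
proof -
  have "T (T y - b *\<^sub>R y) - a *\<^sub>R (T y - b *\<^sub>R y) = T (T y) - (a + b) *\<^sub>R T y + (a * b) *\<^sub>R y"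
    by (simp add: T_lin algebra_simps)
  also have "\<dots> = T (T y) - (2 * cc) *\<^sub>R T y + (a * b) *\<^sub>R y" using assms by simp
  also have "\<dots> = D (D y) - (cc^2 - a * b) *\<^sub>R y"
    unfolding D_def by (simp add: T_lin algebra_simps power2_eq_square scaleR_2 flip: scaleR_add_left)
  finally show ?thesis .
qed

lemma Zspec:
  assumes ap: "apT (\<lambda>y. D (D y)) HYs nu"
  shows "nu = 0 \<or> nu \<ge> gg^2"
proof (rule ccontr)
  assume "\<not> ?thesis"
  then have nz: "nu \<noteq> 0" and lt: "nu < gg^2" by auto
  show False
  proof (cases "nu < 0")
    case True
    obtain y where y: "y \<in> HYs" "norm y = 1" "norm (D (D y) - nu *\<^sub>R y) < -nu"
      using ap True unfolding apT_def by (meson neg_0_less_iff_less)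
    have "inner (D (D y) - nu *\<^sub>R y) y = (norm (D y))^2 - nu"
      using y(2) by (simp add: inner_diff_left DD_inner power2_norm_eq_inner[symmetric])
    also have "\<dots> \<ge> -nu" by simp
    finally have "-nu \<le> inner (D (D y) - nu *\<^sub>R y) y" .
    also have "\<dots> \<le> norm (D (D y) - nu *\<^sub>R y) * norm y" by (rule norm_cauchy_schwarz)
    finally show False using y by simp
  next
    case False
    then have np: "nu > 0" using nz by simp
    define \<rho> where "\<rho> = sqrt nu"
    have rp: "\<rho> > 0" unfolding \<rho>_def using np by simp
    have rsq: "\<rho>^2 = nu" unfolding \<rho>_def using np by simp
    have gp: "gg > 0" unfolding gg_def using s_pos by simp
    have rg: "\<rho> < gg" using lt rsq gp rp by (metis power_less_imp_less_base less_eq_real_def)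
    obtain C1 where C1: "C1 > 0" "\<And>y. norm y \<le> C1 * norm (T y - (cc + \<rho>) *\<^sub>R y)"
      by (rule lb_gap[of "cc + \<rho>"]) (use rp rg in auto)
    obtain C2 where C2: "C2 > 0" "\<And>y. norm y \<le> C2 * norm (T y - (cc - \<rho>) *\<^sub>R y)"
      by (rule lb_gap[of "cc - \<rho>"]) (use rp rg in auto)
    have fa: "T (T y - (cc - \<rho>) *\<^sub>R y) - (cc + \<rho>) *\<^sub>R (T y - (cc - \<rho>) *\<^sub>R y) = D (D y) - nu *\<^sub>R y" for y
      using factor[of "cc + \<rho>" "cc - \<rho>" y] rsq by (simp add: power2_eq_square algebra_simps)
    have bnd: "norm y \<le> (C2 * C1) * norm (D (D y) - nu *\<^sub>R y)" for y
    proof -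
      have "norm y \<le> C2 * norm (T y - (cc - \<rho>) *\<^sub>R y)" by (rule C2(2))
      also have "\<dots> \<le> C2 * (C1 * norm (D (D y) - nu *\<^sub>R y))"
        using C1(2)[of "T y - (cc - \<rho>) *\<^sub>R y"] C2(1) unfolding fa by (intro mult_left_mono) auto
      finally show ?thesis by (simp add: mult.assoc)
    qed
    have ep: "1/(C2 * C1) > 0" using C1 C2 by simp
    obtain y where y: "y \<in> HYs" "norm y = 1" "norm (D (D y) - nu *\<^sub>R y) < 1/(C2 * C1)"
      using ap ep unfolding apT_def by blast
    have "1 \<le> (C2 * C1) * norm (D (D y) - nu *\<^sub>R y)" using bnd[of y] y(2) by simp
    also have "\<dots> < (C2 * C1) * (1/(C2 * C1))" using y(3) C1 C2 by (intro mult_strict_left_mono) auto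
    also have "\<dots> = 1" using C1 C2 by simp
    finally show False by simp
  qed
qed

definition gam :: real where "gam = gg^2/4"

lemma gg_pos: "gg > 0" unfolding gg_def using s_pos by simp
lemma gam_pos: "gam > 0" unfolding gam_def using gg_pos by simp

lemma Zlow:
  assumes ne: "\<exists>y\<in>HYs. norm y = 1" and v: "v \<in> HYs"
  shows "gam * norm v \<le> norm (D (D v) - gam *\<^sub>R v)"
proof -
  define r where "r = gg/2"
  have rp: "r > 0" "r < gg" unfolding r_def using gg_pos by auto
  have rg: "r^2 = gam" unfolding r_def gam_def by (simp add: power2_eq_square)
  obtain Q1 where Q1: "bounded_linear Q1" "\<And>y. Q1 (T y - (cc + r) *\<^sub>R y) = y"
      "\<And>y. T (Q1 y) - (cc + r) *\<^sub>R Q1 y = y" "\<And>y. y \<in> HYs \<Longrightarrow> Q1 y \<in> HYs"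
      "\<And>y z. inner (Q1 y) z = inner y (Q1 z)"
    by (rule inv_gap[of "cc + r"]) (use rp in auto)
  obtain Q2 where Q2: "bounded_linear Q2" "\<And>y. Q2 (T y - (cc - r) *\<^sub>R y) = y"
      "\<And>y. T (Q2 y) - (cc - r) *\<^sub>R Q2 y = y" "\<And>y. y \<in> HYs \<Longrightarrow> Q2 y \<in> HYs"
      "\<And>y z. inner (Q2 y) z = inner y (Q2 z)"
    by (rule inv_gap[of "cc - r"]) (use rp in auto)
  define E where "E = (\<lambda>y. D (D y) - gam *\<^sub>R y)"
  have E1: "E y = T (T y - (cc - r) *\<^sub>R y) - (cc + r) *\<^sub>R (T y - (cc - r) *\<^sub>R y)" for y
    unfolding E_def using factor[of "cc + r" "cc - r" y] rg by (simp add: power2_eq_square algebra_simps)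
  have E2: "E y = T (T y - (cc + r) *\<^sub>R y) - (cc - r) *\<^sub>R (T y - (cc + r) *\<^sub>R y)" for y
    unfolding E_def using factor[of "cc - r" "cc + r" y] rg by (simp add: power2_eq_square algebra_simps)
  define Qz where "Qz = (\<lambda>y. Q2 (Q1 y))"
  have QE: "Qz (E y) = y" for y unfolding Qz_def E1 Q1(2) Q2(2) ..
  have EQ: "E (Qz y) = y" for y unfolding Qz_def E1 Q2(3) Q1(3) ..
  have comm: "Q1 (Q2 z) = Qz z" for z
  proof -
    have "E (Q1 (Q2 z)) = z" unfolding E2 Q1(3) Q2(3) ..
    then show ?thesis using QE[of "Q1 (Q2 z)"] by simp
  qed
  have Qsa: "inner (Qz y) z = inner y (Qz z)" for y z
    unfolding Qz_def using Q1(5) Q2(5) comm[of z] unfolding Qz_def by metis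
  have blQ: "bounded_linear Qz" unfolding Qz_def
    using bounded_linear_compose[OF Q2(1) Q1(1)] by simp
  have QH: "y \<in> HYs \<Longrightarrow> Qz y \<in> HYs" for y unfolding Qz_def using Q1(4) Q2(4) by blast
  have EH: "y \<in> HYs \<Longrightarrow> E y \<in> HYs" for y unfolding E_def by (intro HY_diff HY_scale D_HY)
  obtain M where M: "M \<ge> 0" "\<And>y. y \<in> HYs \<Longrightarrow> norm (Qz y) \<le> M * norm y"
      "apT Qz HYs M \<or> apT Qz HYs (-M)"
    by (rule lemmaA[OF blQ Qsa subspace_HY QH ne]) auto
  have Mp: "M > 0"
  proof -
    obtain y where y: "y \<in> HYs" "norm y = 1" using ne by blast
    have "1 \<le> M * norm (E y)" using M(2)[OF EH[OF y(1)]] QE[of y] y(2) by simp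
    then show ?thesis using M(1) by (cases "M = 0") auto
  qed
  have lE: "linear E" unfolding E_def by (rule linearI) (simp_all add: D_lin algebra_simps)
  have conv: "apT (\<lambda>y. D (D y)) HYs (gam + 1/nu)" if ap: "apT Qz HYs nu" and nz: "nu \<noteq> 0" for nu
    unfolding apT_def
  proof (intro allI impI)
    fix \<epsilon> :: real assume ep: "\<epsilon> > 0"
    have "\<exists>a\<in>HYs. norm (id a) = 1 \<and> norm (E a - (1/nu) *\<^sub>R id a) < \<epsilon>"
    proof (rule ap_conv[where Q=Qz and H=HYs and HX'=HYs and B=E and J=id, OF lE linear_id])
      show "\<And>\<epsilon>. 0 < \<epsilon> \<Longrightarrow> \<exists>y\<in>HYs. norm y = 1 \<and> norm (id (Qz y) - nu *\<^sub>R y) < \<epsilon>"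
        using ap unfolding apT_def by simp
    qed (use EQ QH HY_scale nz ep in auto)
    then show "\<exists>y\<in>HYs. norm y = 1 \<and> norm (D (D y) - (gam + 1 / nu) *\<^sub>R y) < \<epsilon>"
      unfolding E_def by (simp add: algebra_simps)
  qed
  have gg4: "gg^2 = 4 * gam" unfolding gam_def by simp
  have key: "1/M \<ge> gam"
  proof (cases "apT Qz HYs M")
    case True
    have "gam + 1/M = 0 \<or> gam + 1/M \<ge> gg^2" using Zspec[OF conv[OF True]] Mp by simp
    moreover have "1/M > 0" using Mp by simp
    ultimately show ?thesis using gam_pos gg4 by linarith
  next
    case False
    then have "apT Qz HYs (-M)" using M(3) by simp
    then have "gam + 1/(-M) = 0 \<or> gam + 1/(-M) \<ge> gg^2" using Zspec[OF conv, of "-M"] Mp by simp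
    moreover have "1/(-M) = - (1/M)" by simp
    moreover have "1/M > 0" using Mp by simp
    ultimately show ?thesis using gam_pos gg4 by linarith
  qed
  have "norm v \<le> M * norm (E v)" using M(2)[OF EH[OF v]] QE[of v] by simp
  then have "gam * norm v \<le> gam * (M * norm (E v))" using gam_pos by simp
  also have "\<dots> \<le> norm (E v)"
  proof -
    have "gam * M \<le> 1" using key Mp by (simp add: field_simps)
    then have "(gam * M) * norm (E v) \<le> 1 * norm (E v)" by (intro mult_right_mono) auto
    then show ?thesis by (simp add: mult.assoc)
  qed
  finally show ?thesis unfolding E_def .
qed

lemma star:
  assumes ne: "\<exists>y\<in>HYs. norm y = 1" and v: "v \<in> HYs"
  shows "(gg^2/2) * (norm (D v))^2 \<le> (norm (D (D v)))^2"
proof -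
  have "(gam * norm v)^2 \<le> (norm (D (D v) - gam *\<^sub>R v))^2"
    using Zlow[OF ne v] gam_pos by (intro power_mono) auto
  also have "\<dots> = (norm (D (D v)))^2 - 2 * gam * (norm (D v))^2 + gam^2 * (norm v)^2"
    unfolding norm_diff_sq by (simp add: DD_inner power_mult_distrib)
  finally have "2 * gam * (norm (D v))^2 \<le> (norm (D (D v)))^2" by (simp add: power_mult_distrib)
  then show ?thesis unfolding gam_def by simp
qed

lemma lbD:
  assumes ne: "\<exists>y\<in>HYs. norm y = 1" and y: "y \<in> HYs"
  shows "(gg^2/2) * (norm y)^2 \<le> (norm (D y))^2"
proof -
  interpret DL: bounded_linear D by (rule bl_D)
  obtain K where K: "\<And>x. norm (D x) \<le> norm x * K" "K > 0" using DL.pos_bounded by blast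
  define K2 where "K2 = K^2"
  have K2p: "K2 > 0" unfolding K2_def using K by simp
  define S where "S = (\<lambda>x. x - (1/K2) *\<^sub>R D (D x))"
  have DS: "D (S x) = S (D x)" for x unfolding S_def by (simp add: D_lin)
  have SH: "x \<in> HYs \<Longrightarrow> S x \<in> HYs" for x unfolding S_def by (intro HY_diff HY_scale D_HY)
  have DDK: "(norm (D (D x)))^2 \<le> K2 * (norm (D x))^2" for x
  proof -
    have "norm (D (D x)) \<le> norm (D x) * K" by (rule K(1))
    then have "(norm (D (D x)))^2 \<le> (norm (D x) * K)^2" by (intro power_mono) auto
    then show ?thesis unfolding K2_def by (simp add: power_mult_distrib mult.commute)
  qed
  define th2 where "th2 = 1 - (gg^2/2)/K2"
  have step2: "(norm (S (D v)))^2 \<le> th2 * (norm (D v))^2" if v: "v \<in> HYs" for v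
  proof -
    define w where "w = D v"
    have st: "(gg^2/2) * (norm w)^2 \<le> (norm (D w))^2" unfolding w_def by (rule star[OF ne v])
    have "(norm (S w))^2 = (norm w)^2 - 2 * (1/K2) * inner w (D (D w)) + (1/K2)^2 * (norm (D (D w)))^2"
      unfolding S_def norm_diff_sq using K2p by (simp add: power_mult_distrib power_divide)
    also have "inner w (D (D w)) = (norm (D w))^2" using DD_inner[of w] by (simp add: inner_commute)
    finally have "(norm (S w))^2 = (norm w)^2 - 2 * (1/K2) * (norm (D w))^2 + (1/K2)^2 * (norm (D (D w)))^2" .
    also have "\<dots> \<le> (norm w)^2 - 2 * (1/K2) * (norm (D w))^2 + (1/K2)^2 * (K2 * (norm (D w))^2)"
      using DDK[of w] by (intro add_left_mono mult_left_mono) auto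
    also have "\<dots> = (norm w)^2 - (1/K2) * (norm (D w))^2" using K2p by (simp add: power2_eq_square field_simps)
    also have "\<dots> \<le> (norm w)^2 - (1/K2) * ((gg^2/2) * (norm w)^2)"
      using st K2p by (intro diff_left_mono mult_left_mono) auto
    also have "\<dots> = th2 * (norm w)^2" unfolding th2_def by (simp add: algebra_simps)
    finally show ?thesis unfolding w_def .
  qed
  define th where "th = sqrt (max 0 th2)"
  have th0: "th \<ge> 0" unfolding th_def by simp
  have th1: "th < 1"
  proof -
    have "(gg^2/2)/K2 > 0" using gg_pos K2p by simp
    then have "max 0 th2 < 1" unfolding th2_def by simp
    then show ?thesis unfolding th_def using real_sqrt_less_iff[of "max 0 th2" 1] by simp
  qed
  have step: "norm (S (D v)) \<le> th * norm (D v)" if v: "v \<in> HYs" for v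
  proof -
    have "(norm (S (D v)))^2 \<le> max 0 th2 * (norm (D v))^2"
      using step2[OF v] by (meson max.cobounded2 mult_right_mono order_trans zero_le_power2)
    also have "\<dots> = (th * norm (D v))^2" unfolding th_def by (simp add: power_mult_distrib)
    finally show ?thesis by (rule power2_le_imp_le) (use th0 in simp)
  qed
  have SnD: "(S ^^ N) (D x) = D ((S ^^ N) x)" for N x by (induction N) (simp_all add: DS)
  have SnH: "x \<in> HYs \<Longrightarrow> (S ^^ N) x \<in> HYs" for N x by (induction N) (simp_all add: SH)
  have iter: "norm ((S ^^ N) (D v)) \<le> th^N * norm (D v)" if v: "v \<in> HYs" for N v
  proof (induction N)
    case 0 then show ?case by simp
  next
    case (Suc N)
    have "(S ^^ Suc N) (D v) = S (D ((S ^^ N) v))" by (simp add: SnD)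
    then have "norm ((S ^^ Suc N) (D v)) \<le> th * norm (D ((S ^^ N) v))" using step[OF SnH[OF v]] by simp
    also have "\<dots> = th * norm ((S ^^ N) (D v))" by (simp add: SnD)
    also have "\<dots> \<le> th * (th^N * norm (D v))" using Suc th0 by (intro mult_left_mono) auto
    finally show ?case by (simp add: mult.assoc)
  qed
  define x where "x = (\<lambda>N. (S ^^ N) y)"
  have xH: "x N \<in> HYs" for N unfolding x_def by (rule SnH[OF y])
  define f where "f = (\<lambda>k. x k - x (Suc k))"
  have f_eq: "f k = (1/K2) *\<^sub>R (S ^^ k) (D (D y))" for k
  proof -
    have "f k = x k - S (x k)" unfolding f_def x_def by simp
    also have "\<dots> = (1/K2) *\<^sub>R D (D (x k))" unfolding S_def by simp
    also have "D (D (x k)) = (S ^^ k) (D (D y))" unfolding x_def by (simp add: SnD)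
    finally show ?thesis .
  qed
  have fb: "norm (f k) \<le> (1/K2) * norm (D (D y)) * th^k" for k
  proof -
    have "norm (f k) = (1/K2) * norm ((S ^^ k) (D (D y)))" unfolding f_eq using K2p by simp
    also have "\<dots> \<le> (1/K2) * (th^k * norm (D (D y)))"
      using iter[OF D_HY[OF y], of k] K2p by (intro mult_left_mono) auto
    finally show ?thesis by (simp add: algebra_simps)
  qed
  define C where "C = (1/K2) * norm (D (D y))"
  have C0: "C \<ge> 0" unfolding C_def using K2p by simp
  have th1': "1 - th > 0" using th1 by simp
  have tail: "norm (x m - x (m + j)) \<le> C * th^m * (1 - th^j) / (1 - th)" for m j
  proof (induction j)
    case 0 then show ?case by simp
  next
    case (Suc j)
    have e: "x m - x (m + Suc j) = (x m - x (m + j)) + f (m + j)" unfolding f_def by simp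
    have "norm (x m - x (m + Suc j)) \<le> norm (x m - x (m + j)) + norm (f (m + j))"
      unfolding e by (rule norm_triangle_ineq)
    also have "\<dots> \<le> C * th^m * (1 - th^j) / (1 - th) + C * th^(m+j)"
      using Suc fb[of "m+j"] unfolding C_def by (intro add_mono) auto
    also have "\<dots> = C * th^m * (1 - th^Suc j) / (1 - th)"
      using th1' by (simp add: field_simps power_add)
    finally show ?case .
  qed
  have tail': "norm (x m - x (m + j)) \<le> C * th^m / (1 - th)" for m j
  proof -
    have "C * th^m * (1 - th^j) \<le> C * th^m * 1"
      using C0 th0 by (intro mult_left_mono) auto
    then have "C * th^m * (1 - th^j) / (1 - th) \<le> C * th^m / (1 - th)"
      using th1' by (simp add: divide_right_mono)
    then show ?thesis using tail[of m j] by linarith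
  qed
  have glim: "(\<lambda>m. C * th^m / (1 - th)) \<longlonglongrightarrow> 0"
    by (intro tendsto_divide_zero tendsto_mult_right_zero LIMSEQ_power_zero) (use th0 th1 in simp)
  have cx: "Cauchy x"
  proof (rule CauchyI)
    fix \<epsilon> :: real assume ep: "\<epsilon> > 0"
    have "eventually (\<lambda>m. C * th^m / (1 - th) < \<epsilon>/2) sequentially"
      using order_tendstoD(2)[OF glim, of "\<epsilon>/2"] ep by simp
    then obtain M where M: "\<And>m. m \<ge> M \<Longrightarrow> C * th^m / (1 - th) < \<epsilon>/2"
      unfolding eventually_sequentially by blast
    show "\<exists>M. \<forall>m\<ge>M. \<forall>n\<ge>M. norm (x m - x n) < \<epsilon>"
    proof (intro exI[of _ M] allI impI)
      fix m n assume mn: "m \<ge> M" "n \<ge> M"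
      have a: "norm (x M - x m) \<le> C * th^M / (1 - th)" using tail'[of M "m - M"] mn by simp
      have b: "norm (x M - x n) \<le> C * th^M / (1 - th)" using tail'[of M "n - M"] mn by simp
      have "x m - x n = (x M - x n) - (x M - x m)" by simp
      then have "norm (x m - x n) \<le> norm (x M - x n) + norm (x M - x m)"
        using norm_triangle_ineq4[of "x M - x n" "x M - x m"] by simp
      then show "norm (x m - x n) < \<epsilon>" using a b M[of M] by linarith
    qed
  qed
  then obtain z where xlim: "x \<longlonglongrightarrow> z" unfolding Cauchy_convergent_iff convergent_def by blast
  have zH: "z \<in> HYs" by (rule closed_sequentially[OF closed_HY xH xlim])
  have Dlim1: "(\<lambda>N. D (x N)) \<longlonglongrightarrow> D z" by (rule DL.tendsto[OF xlim])
  have Dlim2: "(\<lambda>N. D (x N)) \<longlonglongrightarrow> 0"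
  proof -
    have g0: "(\<lambda>N. th^N * norm (D y)) \<longlonglongrightarrow> 0"
      by (intro tendsto_mult_left_zero LIMSEQ_power_zero) (use th0 th1 in simp)
    have "norm (D (x N)) \<le> th^N * norm (D y)" for N
      unfolding x_def using iter[OF y, of N] by (simp add: SnD)
    then have ev: "eventually (\<lambda>N. norm (D (x N)) \<le> th^N * norm (D y)) sequentially" by simp
    show ?thesis by (rule Lim_null_comparison[OF ev g0])
  qed
  have Dz: "D z = 0" using LIMSEQ_unique[OF Dlim1 Dlim2] .
  have z0: "z = 0"
  proof -
    have Tz: "T z = cc *\<^sub>R z" using Dz unfolding D_def by simp
    define b where "b = (-sg) *\<^sub>R R z"
    have "incl b = (-sg) *\<^sub>R T z" unfolding b_def T_def by (simp add: incl_lin)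
    also have "\<dots> = z" using Tz s_pos unfolding cc_def by simp
    finally have ib: "incl b = z" .
    have LR: "L (R z) = z + mu *\<^sub>R T z" using res_eqs(1)[OF r, of z] unfolding T_def by (simp add: algebra_simps)
    have "L b = (-sg) *\<^sub>R (z + mu *\<^sub>R (cc *\<^sub>R z))" unfolding b_def by (simp add: L_lin LR Tz)
    also have "\<dots> = lam *\<^sub>R z" using s_pos by (simp add: cc_def algebra_simps)
    finally have "L b = lam *\<^sub>R incl b" using ib by simp
    then obtain k where "b = k *\<^sub>R phi" using simple by blast
    then have zk: "z = k *\<^sub>R ph" using ib by (simp add: incl_lin)
    have "0 = inner z ph" using zH HY_iff by simp
    also have "\<dots> = k" unfolding zk using phph by simp
    finally show ?thesis using zk by simp
  qed
  have rep: "\<exists>v\<in>HYs. y - x N = D v" for N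
  proof (induction N)
    case 0 then show ?case unfolding x_def by (intro bexI[of _ 0]) (simp_all add: D_lin HY_0)
  next
    case (Suc N)
    then obtain v where v: "v \<in> HYs" "y - x N = D v" by blast
    have fN: "f N = (1/K2) *\<^sub>R D (D (x N))"
    proof -
      have "f N = x N - S (x N)" unfolding f_def x_def by simp
      then show ?thesis unfolding S_def by simp
    qed
    have "y - x (Suc N) = (y - x N) + f N" unfolding f_def by simp
    also have "\<dots> = D v + (1/K2) *\<^sub>R D (D (x N))" using v(2) fN by simp
    also have "\<dots> = D (v + (1/K2) *\<^sub>R D (x N))" by (simp add: D_lin)
    finally show ?case using v(1) xH by (intro bexI[of _ "v + (1/K2) *\<^sub>R D (x N)"]) (auto intro: HY_add HY_scale D_HY)
  qed
  have ineq: "(gg^2/2) * (norm (y - x N))^2 \<le> (norm (D (y - x N)))^2" for N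
  proof -
    obtain v where v: "v \<in> HYs" "y - x N = D v" using rep by blast
    show ?thesis unfolding v(2) by (rule star[OF ne v(1)])
  qed
  have yl: "(\<lambda>N. y - x N) \<longlonglongrightarrow> y"
    using tendsto_diff[OF tendsto_const[of y] xlim] z0 by simp
  have l1: "(\<lambda>N. (gg^2/2) * (norm (y - x N))^2) \<longlonglongrightarrow> (gg^2/2) * (norm y)^2"
    using yl by (intro tendsto_intros)
  have l2: "(\<lambda>N. (norm (D (y - x N)))^2) \<longlonglongrightarrow> (norm (D y))^2"
    using DL.tendsto[OF yl] by (intro tendsto_intros)
  show ?thesis by (rule LIMSEQ_le[OF l1 l2]) (use ineq in blast)
qed

end


context spec begin

lemma specB: "\<not> apH lam"
proof
  assume ap: "apH lam"
  have "lam + e/2 \<notin> op_spectrum incl L"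
  proof
    assume "lam + e/2 \<in> op_spectrum incl L"
    then have "lam + e/2 = lam" using iso[of "lam + e/2"] e_pos by simp
    then show False using e_pos by simp
  qed
  then obtain R where r: "res (lam + e/2) R" using spec_iff by blast
  interpret B: sB incl L lam phi n e R
    by (intro sB.intro sB_axioms.intro spec_axioms r)
  define sg where "sg = e/2"
  have sp: "sg > 0" unfolding sg_def using e_pos by simp
  have ne: "\<exists>y\<in>HYs. norm y = 1"
  proof -
    obtain a where "a \<in> HXs" "norm (incl a) = 1" using ap unfolding apH_def by (meson zero_less_one)
    then show ?thesis using HX_iff by blast
  qed
  define \<eta> where "\<eta> = sg/4"
  have etap: "\<eta> > 0" unfolding \<eta>_def using sp by simp
  obtain a where a: "a \<in> HXs" "norm (incl a) = 1" "norm (L a - lam *\<^sub>R incl a) < \<eta>"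
    using ap etap unfolding apH_def by blast
  define y where "y = L a - (lam + sg) *\<^sub>R incl a"
  have yH: "y \<in> HYs" unfolding y_def using a(1) L_HX HX_iff by (intro HY_diff HY_scale) auto
  have Ty: "B.T y = incl a" unfolding B.T_def y_def sg_def using res_eqs(2)[OF r, of a] by simp
  have y2: "y = (L a - lam *\<^sub>R incl a) - sg *\<^sub>R incl a" unfolding y_def by (simp add: algebra_simps)
  have Dy: "B.D y = (1/sg) *\<^sub>R (L a - lam *\<^sub>R incl a)"
  proof -
    have "B.D y = incl a + (1/sg) *\<^sub>R y" unfolding B.D_def Ty B.cc_def sg_def by simp
    also have "\<dots> = incl a + (1/sg) *\<^sub>R ((L a - lam *\<^sub>R incl a) - sg *\<^sub>R incl a)" using y2 by simp
    also have "\<dots> = (1/sg) *\<^sub>R (L a - lam *\<^sub>R incl a)" using sp by (simp add: algebra_simps)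
    finally show ?thesis .
  qed
  have ny: "norm y \<ge> 3 * sg / 4"
  proof -
    have "norm (sg *\<^sub>R incl a) - norm (L a - lam *\<^sub>R incl a) \<le> norm (sg *\<^sub>R incl a - (L a - lam *\<^sub>R incl a))"
      by (rule norm_triangle_ineq2)
    also have "\<dots> = norm y" unfolding y2 by (simp add: norm_minus_commute)
    finally show ?thesis using a(2,3) sp unfolding \<eta>_def by simp
  qed
  have nD: "norm (B.D y) < 1/4"
  proof -
    have "norm (B.D y) = norm (L a - lam *\<^sub>R incl a) / sg" unfolding Dy using sp by simp
    also have "\<dots> < \<eta> / sg" using a(3) sp by (simp add: divide_strict_right_mono)
    also have "\<dots> = 1/4" unfolding \<eta>_def using sp by simp
    finally show ?thesis .
  qed
  have lb: "(B.gg^2/2) * (norm y)^2 \<le> (norm (B.D y))^2" by (rule B.lbD[OF ne yH])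
  have gg: "B.gg = 1/(2 * sg)" unfolding B.gg_def sg_def by simp
  have "(B.gg^2/2) * (3 * sg / 4)^2 \<le> (B.gg^2/2) * (norm y)^2"
    using ny sp by (intro mult_left_mono power_mono) auto
  also have "\<dots> \<le> (norm (B.D y))^2" by (rule lb)
  also have "\<dots> < (1/4)^2" using nD by (intro power_strict_mono) auto
  finally have "(B.gg^2/2) * (3 * sg / 4)^2 < (1/4)^2" .
  moreover have "(B.gg^2/2) * (3 * sg / 4)^2 = 9/128" unfolding gg using sp
    by (simp add: power2_eq_square field_simps)
  ultimately show False by (simp add: power2_eq_square)
qed

lemma claimC: "\<exists>\<delta>>0. \<forall>a\<in>HXs. (n + \<delta>) * norm (incl a) \<le> norm (L a)"
proof (rule ccontr)
  assume "\<not> ?thesis"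
  then have neg: "\<And>\<delta>. \<delta> > 0 \<Longrightarrow> \<exists>a\<in>HXs. norm (L a) < (n + \<delta>) * norm (incl a)"
    by (meson not_le)
  have main: "(\<exists>a\<in>HXs. norm (incl a) = 1 \<and> norm (L a - n *\<^sub>R incl a) < \<epsilon>) \<or>
              (\<exists>a\<in>HXs. norm (incl a) = 1 \<and> norm (L a - (-n) *\<^sub>R incl a) < \<epsilon>)" if ep: "\<epsilon> > 0" for \<epsilon>
  proof -
    define e' where "e' = \<epsilon>/4"
    have e'p: "e' > 0" unfolding e'_def using ep by simp
    obtain mu where mu: "\<bar>mu\<bar> < e'" "mu \<noteq> lam" "mu \<notin> op_spectrum incl L" using admissible[OF e'p] by blast
    obtain R where r: "res mu R" using mu(3) spec_iff by blast
    obtain a where a: "a \<in> HXs" "norm (L a) < (n + e') * norm (incl a)" using neg[OF e'p] by blast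
    have ia: "norm (incl a) > 0"
    proof (rule ccontr)
      assume "\<not> ?thesis"
      then have "norm (incl a) = 0" by simp
      then show False using a(2) by simp
    qed
    have ne: "\<exists>y\<in>HYs. norm y = 1"
      using HX_iff a(1) ia HY_scale[of "incl a" "1/norm (incl a)"] by (intro bexI[of _ "(1/norm (incl a)) *\<^sub>R incl a"]) auto
    obtain M where M: "M \<ge> 0" "\<And>y. y \<in> HYs \<Longrightarrow> norm (incl (R y)) \<le> M * norm y"
      "M > 0 \<Longrightarrow> apH (mu + 1/M) \<or> apH (mu - 1/M)" using specA[OF r mu(2) ne] by blast
    define y where "y = L a - mu *\<^sub>R incl a"
    have yH: "y \<in> HYs" unfolding y_def using a(1) L_HX HX_iff by (intro HY_diff HY_scale) auto
    have Ry: "R y = a" unfolding y_def by (rule res_eqs(2)[OF r])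
    have ny: "norm y < (n + 2 * e') * norm (incl a)"
    proof -
      have "norm y \<le> norm (L a) + \<bar>mu\<bar> * norm (incl a)" unfolding y_def
        using norm_triangle_ineq4[of "L a" "mu *\<^sub>R incl a"] by simp
      also have "\<dots> < (n + e') * norm (incl a) + e' * norm (incl a)"
        using a(2) mu(1) ia by (intro add_less_le_mono mult_right_mono) auto
      finally show ?thesis by (simp add: algebra_simps)
    qed
    have "norm (incl a) \<le> M * norm y" using M(2)[OF yH] Ry by simp
    also have "\<dots> \<le> M * ((n + 2 * e') * norm (incl a))" using ny M(1) by (intro mult_left_mono) auto
    finally have "1 * norm (incl a) \<le> (M * (n + 2 * e')) * norm (incl a)" by (simp add: mult.assoc)
    then have M1: "1 \<le> M * (n + 2 * e')" using ia by (simp add: mult_le_cancel_right)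
    have Mp: "M > 0" using M1 M(1) by (cases "M = 0") auto
    have iM: "1/M \<le> n + 2 * e'" using M1 Mp by (simp add: field_simps)
    obtain sv where sv: "apH sv" "\<bar>sv - mu\<bar> = 1/M"
      using M(3)[OF Mp] by (metis add_diff_cancel_left' abs_minus_cancel abs_of_pos diff_add_cancel
          minus_diff_eq Mp zero_less_divide_1_iff diff_minus_eq_add)
    have svs: "sv \<in> op_spectrum incl L" by (rule apH_spec[OF sv(1)])
    have svl: "sv \<noteq> lam" using sv(1) specB by auto
    have svb: "\<bar>sv\<bar> < n + 3 * e'" using sv(2) iM mu(1) by linarith
    have svn: "\<bar>sv\<bar> > n"
    proof (rule ccontr)
      assume "\<not> ?thesis"
      then have "sv \<in> {-n..n}" by auto
      then show False using gap_out svl svs by blast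
    qed
    define t where "t = (if sv \<ge> 0 then n else -n)"
    have st: "\<bar>sv - t\<bar> < 3 * e'" unfolding t_def using svb svn by auto
    obtain a' where a': "a' \<in> HXs" "norm (incl a') = 1" "norm (L a' - sv *\<^sub>R incl a') < e'"
      using sv(1) e'p unfolding apH_def by blast
    have eq: "L a' - t *\<^sub>R incl a' = (L a' - sv *\<^sub>R incl a') + (sv - t) *\<^sub>R incl a'" by (simp add: algebra_simps)
    have t1: "norm (L a' - t *\<^sub>R incl a') \<le> norm (L a' - sv *\<^sub>R incl a') + norm ((sv - t) *\<^sub>R incl a')"
      unfolding eq by (rule norm_triangle_ineq)
    have t2: "norm ((sv - t) *\<^sub>R incl a') = \<bar>sv - t\<bar>" using a'(2) by simp
    have "norm (L a' - t *\<^sub>R incl a') < \<epsilon>" using t1 t2 a'(3) st unfolding e'_def by linarith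
    then show ?thesis using a' unfolding t_def by (cases "sv \<ge> 0") auto
  qed
  have "(\<forall>\<epsilon>>0. \<exists>a\<in>HXs. norm (incl a) = 1 \<and> norm (L a - n *\<^sub>R incl a) < \<epsilon>) \<or>
        (\<forall>\<epsilon>>0. \<exists>a\<in>HXs. norm (incl a) = 1 \<and> norm (L a - (-n) *\<^sub>R incl a) < \<epsilon>)"
    by (rule dichotomy[OF main]) (assumption | force)+
  then have "apH n \<or> apH (-n)" unfolding apH_def by blast
  then show False
  proof
    assume h: "apH n"
    then have "n \<in> op_spectrum incl L" by (rule apH_spec)
    then have "n = lam" using gap_out[of n] n_nonneg by auto
    then show False using h specB by simp
  next
    assume h: "apH (-n)"
    then have "-n \<in> op_spectrum incl L" by (rule apH_spec)
    then have "-n = lam" using gap_out[of "-n"] n_nonneg by auto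
    then show False using h specB by simp
  qed
qed

lemma SP: "\<exists>mu R \<kappa>. res mu R \<and> mu \<noteq> lam \<and> \<kappa> \<ge> 0 \<and> \<kappa> * (n + \<bar>mu\<bar>) < 1 \<and>
              (\<forall>y\<in>HYs. norm (incl (R y)) \<le> \<kappa> * norm y)"
proof -
  obtain \<delta> where d: "\<delta> > 0" "\<And>a. a \<in> HXs \<Longrightarrow> (n + \<delta>) * norm (incl a) \<le> norm (L a)"
    using claimC by blast
  have d3: "\<delta>/3 > 0" using d by simp
  obtain mu where mu: "\<bar>mu\<bar> < \<delta>/3" "mu \<noteq> lam" "mu \<notin> op_spectrum incl L" using admissible[OF d3] by blast
  obtain R where r: "res mu R" using mu(3) spec_iff by blast
  define q where "q = n + \<delta> - \<bar>mu\<bar>"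
  have qp: "q > 0" unfolding q_def using mu(1) d n_nonneg by simp
  define \<kappa> where "\<kappa> = 1/q"
  have bnd: "norm (incl (R y)) \<le> \<kappa> * norm y" if y: "y \<in> HYs" for y
  proof -
    define a where "a = R y"
    have aH: "a \<in> HXs" unfolding a_def by (rule res_H[OF r mu(2) y])
    have ya: "y = L a - mu *\<^sub>R incl a" unfolding a_def using res_eqs(1)[OF r] by simp
    have "norm (L a) - \<bar>mu\<bar> * norm (incl a) \<le> norm y"
      unfolding ya using norm_triangle_ineq2[of "L a" "mu *\<^sub>R incl a"] by simp
    then have "q * norm (incl a) \<le> norm y" using d(2)[OF aH] unfolding q_def by (simp add: algebra_simps)
    then show ?thesis unfolding \<kappa>_def a_def using qp by (simp add: field_simps)
  qed
  have "\<kappa> * (n + \<bar>mu\<bar>) < 1" unfolding \<kappa>_def using qp mu(1) unfolding q_def by (simp add: field_simps)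
  then show ?thesis using r mu(2) bnd qp unfolding \<kappa>_def by (intro exI[of _ mu] exI[of _ R] exI[of _ "1/q"]) auto
qed

end


lemma deriv_bound:
  fixes G :: "real \<Rightarrow> 'b::real_normed_vector"
  assumes d: "(G has_derivative (\<lambda>h. h *\<^sub>R V)) (at 0)" and b: "\<And>h. norm (G h - G 0) \<le> C * \<bar>h\<bar>"
  shows "norm V \<le> C"
proof (rule field_le_epsilon)
  fix \<epsilon> :: real assume ep: "\<epsilon> > 0"
  obtain d where dd: "d > 0" "\<And>y. norm (y - 0) < d \<Longrightarrow> norm (G y - G 0 - (y - 0) *\<^sub>R V) \<le> \<epsilon> * norm (y - 0)"
    using d ep unfolding has_derivative_at_alt by blast
  define y where "y = d/2"
  have yp: "y > 0" "y < d" unfolding y_def using dd by auto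
  have e1: "norm (G y - G 0 - y *\<^sub>R V) \<le> \<epsilon> * y" using dd(2)[of y] yp by simp
  have "y * norm V = norm (y *\<^sub>R V)" using yp by simp
  also have "\<dots> \<le> norm (G y - G 0) + norm (G y - G 0 - y *\<^sub>R V)"
    using norm_triangle_ineq4[of "G y - G 0" "G y - G 0 - y *\<^sub>R V"] by simp
  also have "\<dots> \<le> C * y + \<epsilon> * y" using b[of y] e1 yp by simp
  finally have "y * norm V \<le> y * (C + \<epsilon>)" by (simp add: algebra_simps)
  then show "norm V \<le> C + \<epsilon>" using yp by simp
qed

locale fullR = spec +
  fixes N :: "'b \<Rightarrow> 'b" and DF :: "'a \<Rightarrow> ('a \<Rightarrow>\<^sub>L 'b)" and mu :: real and R :: "'b \<Rightarrow> 'a" and \<kappa> :: real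
  assumes lipN: "\<And>t. n-lipschitz_on HYs (\<lambda>w. projP ph (N (w + t *\<^sub>R ph)))"
    and deriv: "\<And>a. (Fop incl L N has_derivative blinfun_apply (DF a)) (at a)"
    and r: "res mu R" and ml: "mu \<noteq> lam" and k0: "\<kappa> \<ge> 0" and kq: "\<kappa> * (n + \<bar>mu\<bar>) < 1"
    and kb: "\<And>y. y \<in> HYs \<Longrightarrow> norm (incl (R y)) \<le> \<kappa> * norm y"
begin

abbreviation "P \<equiv> projP ph"
abbreviation "F \<equiv> Fop incl L N"
definition "q = \<kappa> * (n + \<bar>mu\<bar>)"

lemma q0: "q \<ge> 0" and q1: "q < 1" unfolding q_def using k0 n_nonneg kq by auto

lemma P_eq: "P y = y - inner y ph *\<^sub>R ph" unfolding projP_def ..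

lemma P_HY: "P y \<in> HYs" unfolding HY_iff P_eq by (simp add: inner_diff_left phph)

lemma P_id: "y \<in> HYs \<Longrightarrow> P y = y" unfolding HY_iff P_eq by simp

lemma P_lin: "P (a + b) = P a + P b" "P (a - b) = P a - P b" "P (c *\<^sub>R a) = c *\<^sub>R P a" "P 0 = 0"
  "P (c *\<^sub>R ph) = 0" "P (- a) = - P a"
  unfolding P_eq by (auto simp: inner_add_left inner_diff_left algebra_simps phph)

lemma P_ph: "P ph = 0" unfolding P_eq by (simp add: phph)

lemma decomp: "y = P y + inner y ph *\<^sub>R ph" unfolding P_eq by simp

lemma P_norm: "norm (P y) \<le> norm y"
proof -
  have "(norm (P y))^2 = (norm y)^2 - (inner y ph)^2"
    unfolding P_eq norm_diff_sq using phph by (simp add: power2_norm_eq_inner[symmetric] power2_eq_square phin)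
  then have "(norm (P y))^2 \<le> (norm y)^2" by simp
  then show ?thesis by (rule power2_le_imp_le) simp
qed

lemma bl_P: "bounded_linear P"
  by (rule bounded_linear_intro[of _ 1]) (auto simp: P_lin P_norm)

lemma F_eq: "F a = L a - N (incl a)" unfolding Fop_def ..

lemma PF: "w \<in> HXs \<Longrightarrow> P (F (w + t *\<^sub>R phi)) = L w - P (N (incl w + t *\<^sub>R ph))"
  unfolding F_eq by (simp add: L_lin incl_lin P_lin eigv P_id L_HX P_ph)

lemma lipP: "x1 \<in> HYs \<Longrightarrow> x2 \<in> HYs \<Longrightarrow> norm (P (N (x1 + t *\<^sub>R ph)) - P (N (x2 + t *\<^sub>R ph))) \<le> n * norm (x1 - x2)"
  using lipN[of t] unfolding lipschitz_on_def dist_norm by blast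

interpretation TR: bounded_linear "\<lambda>y. incl (R y)" by (rule res_eqs(3)[OF r])

lemma TR_lin: "incl (R (a + b)) = incl (R a) + incl (R b)" "incl (R (a - b)) = incl (R a) - incl (R b)"
  "incl (R (c *\<^sub>R a)) = c *\<^sub>R incl (R a)"
  by (auto simp: TR.add TR.diff TR.scaleR)

definition Phi :: "'b \<Rightarrow> real \<Rightarrow> 'b \<Rightarrow> 'b" where
  "Phi z t x = incl (R (z + P (N (x + t *\<^sub>R ph)) - mu *\<^sub>R x))"

lemma Phi_HY: "z \<in> HYs \<Longrightarrow> x \<in> HYs \<Longrightarrow> Phi z t x \<in> HYs"
  unfolding Phi_def using res_H[OF r ml] HX_iff by (meson HY_add HY_diff HY_scale P_HY)

lemma Phi_contr:
  assumes "x1 \<in> HYs" "x2 \<in> HYs"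
  shows "norm (Phi z t x1 - Phi z t x2) \<le> q * norm (x1 - x2)"
proof -
  define v where "v = (P (N (x1 + t *\<^sub>R ph)) - P (N (x2 + t *\<^sub>R ph))) - mu *\<^sub>R (x1 - x2)"
  have vH: "v \<in> HYs" unfolding v_def using assms by (intro HY_diff HY_scale P_HY)
  have "Phi z t x1 - Phi z t x2 = incl (R v)" unfolding Phi_def v_def
    by (simp add: TR_lin[symmetric] algebra_simps)
  then have "norm (Phi z t x1 - Phi z t x2) \<le> \<kappa> * norm v" using kb[OF vH] by simp
  also have "norm v \<le> n * norm (x1 - x2) + \<bar>mu\<bar> * norm (x1 - x2)"
    unfolding v_def using lipP[OF assms, of t] norm_triangle_ineq4[of "P (N (x1 + t *\<^sub>R ph)) - P (N (x2 + t *\<^sub>R ph))" "mu *\<^sub>R (x1 - x2)"]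
    by simp
  then have "\<kappa> * norm v \<le> \<kappa> * (n * norm (x1 - x2) + \<bar>mu\<bar> * norm (x1 - x2))"
    using k0 by (intro mult_left_mono)
  also have "\<dots> = q * norm (x1 - x2)" unfolding q_def by (simp add: algebra_simps)
  finally show ?thesis .
qed

lemma fix_ex:
  assumes z: "z \<in> HYs"
  shows "\<exists>!x. x \<in> HYs \<and> Phi z t x = x"
proof -
  define f where "f = (\<lambda>x. Phi z t (P x))"
  have "\<exists>!x. f x = x"
  proof (rule banach_fix_type[OF q0 q1])
    show "\<forall>x y. dist (f x) (f y) \<le> q * dist x y"
    proof (intro allI)
      fix x y
      have "dist (f x) (f y) \<le> q * norm (P x - P y)" unfolding f_def dist_norm by (intro Phi_contr P_HY)
      also have "\<dots> \<le> q * norm (x - y)" using q0 P_norm[of "x - y"] by (intro mult_left_mono) (auto simp: P_lin)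
      finally show "dist (f x) (f y) \<le> q * dist x y" by (simp add: dist_norm)
    qed
  qed
  then obtain x where x: "f x = x" "\<And>y. f y = y \<Longrightarrow> y = x" by blast
  have xH: "x \<in> HYs" using x(1) Phi_HY[OF z P_HY] unfolding f_def by metis
  have "Phi z t x = x" using x(1) P_id[OF xH] unfolding f_def by simp
  moreover have "y = x" if "y \<in> HYs" "Phi z t y = y" for y using x(2)[of y] that P_id unfolding f_def by simp
  ultimately show ?thesis using xH by blast
qed

lemma sol_iff:
  assumes w: "w \<in> HXs"
  shows "P (F (w + t *\<^sub>R phi)) = z \<longleftrightarrow> w = R (z + P (N (incl w + t *\<^sub>R ph)) - mu *\<^sub>R incl w)"
proof
  assume h: "P (F (w + t *\<^sub>R phi)) = z"
  then have "L w - P (N (incl w + t *\<^sub>R ph)) = z" using PF[OF w] by simp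
  then have "L w = z + P (N (incl w + t *\<^sub>R ph))" by (simp add: algebra_simps)
  then have "L w - mu *\<^sub>R incl w = z + P (N (incl w + t *\<^sub>R ph)) - mu *\<^sub>R incl w" by simp
  then show "w = R (z + P (N (incl w + t *\<^sub>R ph)) - mu *\<^sub>R incl w)" using res_eqs(2)[OF r, of w] by simp
next
  assume h: "w = R (z + P (N (incl w + t *\<^sub>R ph)) - mu *\<^sub>R incl w)"
  have "L w - mu *\<^sub>R incl w = z + P (N (incl w + t *\<^sub>R ph)) - mu *\<^sub>R incl w"
    using res_eqs(1)[OF r, of "z + P (N (incl w + t *\<^sub>R ph)) - mu *\<^sub>R incl w"] h[symmetric] by simp
  then show "P (F (w + t *\<^sub>R phi)) = z" using PF[OF w] by simp
qed

lemma fiber_ex: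
  assumes z: "z \<in> HYs"
  shows "\<exists>!w. w \<in> HXs \<and> P (F (w + t *\<^sub>R phi)) = z"
proof -
  obtain x where x: "x \<in> HYs" "Phi z t x = x" "\<And>y. y \<in> HYs \<Longrightarrow> Phi z t y = y \<Longrightarrow> y = x"
    using fix_ex[OF z, of t] by blast
  define w where "w = R (z + P (N (x + t *\<^sub>R ph)) - mu *\<^sub>R x)"
  have arg: "z + P (N (x + t *\<^sub>R ph)) - mu *\<^sub>R x \<in> HYs" using z x(1) by (intro HY_diff HY_add HY_scale P_HY)
  have wH: "w \<in> HXs" unfolding w_def by (rule res_H[OF r ml arg])
  have iw: "incl w = x" using x(2) unfolding w_def Phi_def by simp
  have sol: "P (F (w + t *\<^sub>R phi)) = z" using sol_iff[OF wH] iw w_def by simp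
  have uniq: "w' = w" if "w' \<in> HXs" "P (F (w' + t *\<^sub>R phi)) = z" for w'
  proof -
    have e: "w' = R (z + P (N (incl w' + t *\<^sub>R ph)) - mu *\<^sub>R incl w')" using sol_iff[OF that(1)] that(2) by simp
    have "Phi z t (incl w') = incl w'" unfolding Phi_def using e by metis
    then have "incl w' = x" using x(3) that(1) HX_iff by blast
    then show ?thesis using e w_def by simp
  qed
  show ?thesis using wH sol uniq by blast
qed

definition fw :: "'b \<Rightarrow> real \<Rightarrow> 'a" where "fw z t = fiber_w incl L N phi z t"

lemma fw_prop: assumes "z \<in> HYs" shows "fw z t \<in> HXs" "P (F (fw z t + t *\<^sub>R phi)) = z"
proof -
  have "fw z t \<in> HXs \<and> P (F (fw z t + t *\<^sub>R phi)) = z"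
    unfolding fw_def fiber_w_def HX_def[symmetric] using theI'[OF fiber_ex[OF assms, of t]] by simp
  then show "fw z t \<in> HXs" "P (F (fw z t + t *\<^sub>R phi)) = z" by auto
qed

lemma fw_fix: assumes z: "z \<in> HYs"
  shows "fw z t = R (z + P (N (incl (fw z t) + t *\<^sub>R ph)) - mu *\<^sub>R incl (fw z t))"
    "Phi z t (incl (fw z t)) = incl (fw z t)"
  using sol_iff[OF fw_prop(1)[OF z]] fw_prop(2)[OF z] unfolding Phi_def by (metis, metis)

lemma NI_deriv: "((\<lambda>b. N (incl b)) has_derivative (\<lambda>u. L u - DF a u)) (at a)"
proof -
  have "((\<lambda>b. L b - F b) has_derivative (\<lambda>u. L u - DF a u)) (at a)"
    by (intro has_derivative_diff bounded_linear.has_derivative[OF bl_L] deriv has_derivative_ident)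
  moreover have "(\<lambda>b. L b - F b) = (\<lambda>b. N (incl b))" by (simp add: F_eq)
  ultimately show ?thesis by simp
qed

lemma K_bound:
  assumes v: "v \<in> HXs"
  shows "norm (P (L v - DF a v)) \<le> n * norm (incl v)"
proof -
  define G where "G = (\<lambda>h::real. P (N (incl (a + h *\<^sub>R v))))"
  have d1: "((\<lambda>h::real. a + h *\<^sub>R v) has_derivative (\<lambda>h. h *\<^sub>R v)) (at 0)"
    by (intro derivative_eq_intros) auto
  have d2: "((\<lambda>b. N (incl b)) has_derivative (\<lambda>u. L u - DF a u)) (at ((\<lambda>h::real. a + h *\<^sub>R v) 0))"
    using NI_deriv[of a] by simp
  have d3: "((\<lambda>h. N (incl (a + h *\<^sub>R v))) has_derivative (\<lambda>h. L (h *\<^sub>R v) - DF a (h *\<^sub>R v))) (at 0)"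
    using diff_chain_at[OF d1 d2] by (simp add: o_def)
  have d4: "(G has_derivative (\<lambda>h. P (L (h *\<^sub>R v) - DF a (h *\<^sub>R v)))) (at 0)"
    unfolding G_def by (rule bounded_linear.has_derivative[OF bl_P d3])
  have eq: "(\<lambda>h. P (L (h *\<^sub>R v) - DF a (h *\<^sub>R v))) = (\<lambda>h. h *\<^sub>R P (L v - DF a v))"
    by (simp add: L_lin blinfun.scaleR_right P_lin algebra_simps flip: scaleR_diff_right)
  have d5: "(G has_derivative (\<lambda>h. h *\<^sub>R P (L v - DF a v))) (at 0)" using d4 eq by simp
  define c where "c = inner (incl a) ph"
  define a0 where "a0 = a - c *\<^sub>R phi"
  have a0H: "a0 \<in> HXs" unfolding a0_def c_def HX_def by (simp add: incl_lin inner_diff_left phph)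
  have b: "norm (G h - G 0) \<le> (n * norm (incl v)) * \<bar>h\<bar>" for h
  proof -
    have e1: "incl (a + h *\<^sub>R v) = (incl a0 + h *\<^sub>R incl v) + c *\<^sub>R ph" unfolding a0_def by (simp add: incl_lin)
    have e2: "incl a = incl a0 + c *\<^sub>R ph" unfolding a0_def by (simp add: incl_lin)
    have h1: "incl a0 + h *\<^sub>R incl v \<in> HYs" using a0H v HX_iff by (intro HY_add HY_scale) auto
    have h2: "incl a0 \<in> HYs" using a0H HX_iff by auto
    have "norm (G h - G 0) \<le> n * norm ((incl a0 + h *\<^sub>R incl v) - incl a0)"
      unfolding G_def using lipP[OF h1 h2, of c] e1 e2 by simp
    then show ?thesis by (simp add: algebra_simps)
  qed
  show ?thesis by (rule deriv_bound[OF d5 b])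
qed

definition Gam :: "'a \<Rightarrow> 'b \<Rightarrow> 'b \<Rightarrow> 'b" where
  "Gam a y \<sigma> = P (L (R (y + \<sigma>)) - DF a (R (y + \<sigma>))) - mu *\<^sub>R incl (R (y + \<sigma>))"

definition Gl :: "'a \<Rightarrow> 'b \<Rightarrow> 'b" where
  "Gl a d = P (L (R d) - DF a (R d)) - mu *\<^sub>R incl (R d)"

lemma Gl_bound: assumes d: "d \<in> HYs" shows "norm (Gl a d) \<le> q * norm d"
proof -
  have Rd: "R d \<in> HXs" by (rule res_H[OF r ml d])
  have "norm (Gl a d) \<le> norm (P (L (R d) - DF a (R d))) + norm (mu *\<^sub>R incl (R d))"
    unfolding Gl_def by (rule norm_triangle_ineq4)
  also have "\<dots> \<le> n * norm (incl (R d)) + \<bar>mu\<bar> * norm (incl (R d))"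
    using K_bound[OF Rd, of a] by simp
  also have "\<dots> = (n + \<bar>mu\<bar>) * norm (incl (R d))" by (simp add: algebra_simps)
  also have "\<dots> \<le> (n + \<bar>mu\<bar>) * (\<kappa> * norm d)" using kb[OF d] n_nonneg by (intro mult_left_mono) auto
  finally show ?thesis unfolding q_def by (simp add: algebra_simps)
qed

lemma Gam_diff: "Gam a y s1 - Gam a y s2 = Gl a (s1 - s2)"
proof -
  have e: "R (y + s1) = R (y + s2) + R (s1 - s2)" using res_lin(1)[OF r, of "y + s2" "s1 - s2"] by simp
  show ?thesis unfolding Gam_def Gl_def e
    by (simp add: L_lin incl_lin P_lin blinfun.add_right algebra_simps)
qed

lemma Gam_HY: "y \<in> HYs \<Longrightarrow> s \<in> HYs \<Longrightarrow> Gam a y s \<in> HYs"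
  unfolding Gam_def using res_H[OF r ml] HX_iff by (meson HY_add HY_diff HY_scale P_HY)

lemma CR_ex: "\<exists>CR>0. \<forall>x. norm (R x) \<le> CR * norm x"
  using bounded_linear.pos_bounded[OF res_bl[OF r]] by (metis mult.commute)

definition "CR = (SOME CR. CR > 0 \<and> (\<forall>x. norm (R x) \<le> CR * norm x))"

lemma CR: "CR > 0" "norm (R x) \<le> CR * norm x"
  using someI_ex[OF CR_ex] unfolding CR_def by auto

definition "CJ = CR / (1 - q)"
lemma CJ_pos: "CJ > 0" unfolding CJ_def using CR q1 by simp

lemma sol_char:
  assumes y: "y \<in> HYs" and v: "v \<in> HXs" and pv: "P (DF a v) = y"
  shows "Gam a y (L v - y - mu *\<^sub>R incl v) = L v - y - mu *\<^sub>R incl v"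
    "R (y + (L v - y - mu *\<^sub>R incl v)) = v"
    "L v - y - mu *\<^sub>R incl v \<in> HYs"
proof -
  define \<sigma> where "\<sigma> = L v - y - mu *\<^sub>R incl v"
  have R1: "R (y + \<sigma>) = v" unfolding \<sigma>_def using res_eqs(2)[OF r, of v] by (simp add: algebra_simps)
  have "Gam a y \<sigma> = P (L v - DF a v) - mu *\<^sub>R incl v" unfolding Gam_def R1 ..
  also have "\<dots> = \<sigma>" unfolding \<sigma>_def using pv by (simp add: P_lin P_id L_HX[OF v])
  finally show "Gam a y \<sigma> = \<sigma>" "R (y + \<sigma>) = v" using R1 by (auto simp: \<sigma>_def)
  show "\<sigma> \<in> HYs" unfolding \<sigma>_def using L_HX[OF v] y v HX_iff by (intro HY_diff HY_scale) auto
qed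

lemma sol_bound:
  assumes y: "y \<in> HYs" and v: "v \<in> HXs" and pv: "P (DF a v) = y"
  shows "norm v \<le> CJ * norm y"
proof -
  define \<sigma> where "\<sigma> = L v - y - mu *\<^sub>R incl v"
  note sc = sol_char[OF y v pv, folded \<sigma>_def]
  have "norm \<sigma> = norm ((Gam a y \<sigma> - Gam a y 0) + Gam a y 0)" using sc(1) by simp
  also have "\<dots> \<le> norm (Gam a y \<sigma> - Gam a y 0) + norm (Gam a y 0)" by (rule norm_triangle_ineq)
  also have "Gam a y \<sigma> - Gam a y 0 = Gl a \<sigma>" using Gam_diff[of a y \<sigma> 0] by simp
  also have "Gam a y 0 = Gl a y" unfolding Gam_def Gl_def by simp
  finally have "norm \<sigma> \<le> norm (Gl a \<sigma>) + norm (Gl a y)" .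
  also have "\<dots> \<le> q * norm \<sigma> + q * norm y" using Gl_bound[OF sc(3)] Gl_bound[OF y] by (intro add_mono)
  finally have "(1 - q) * norm \<sigma> \<le> q * norm y" by (simp add: algebra_simps)
  then have ns: "norm \<sigma> \<le> q / (1 - q) * norm y" using q1 by (simp add: field_simps)
  have "norm v = norm (R (y + \<sigma>))" using sc(2) by simp
  also have "\<dots> \<le> CR * norm (y + \<sigma>)" by (rule CR(2))
  also have "\<dots> \<le> CR * (norm y + q / (1 - q) * norm y)"
    using norm_triangle_ineq[of y \<sigma>] ns CR(1) by (intro mult_left_mono) auto
  also have "\<dots> = CJ * norm y" unfolding CJ_def using q1 by (simp add: field_simps)
  finally show ?thesis .
qed

lemma lin_ex:
  assumes y: "y \<in> HYs"
  shows "\<exists>!v. v \<in> HXs \<and> P (DF a v) = y"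
proof -
  define f where "f = (\<lambda>\<sigma>. Gam a y (P \<sigma>))"
  have "\<exists>!x. f x = x"
  proof (rule banach_fix_type[OF q0 q1])
    show "\<forall>x z. dist (f x) (f z) \<le> q * dist x z"
    proof (intro allI)
      fix x z
      have "dist (f x) (f z) = norm (Gl a (P x - P z))" unfolding f_def dist_norm Gam_diff ..
      also have "\<dots> \<le> q * norm (P x - P z)" using Gl_bound[of "P x - P z" a] by (simp add: HY_diff P_HY)
      also have "\<dots> \<le> q * norm (x - z)" using q0 P_norm[of "x - z"] by (intro mult_left_mono) (auto simp: P_lin)
      finally show "dist (f x) (f z) \<le> q * dist x z" by (simp add: dist_norm)
    qed
  qed
  then obtain \<sigma> where sg: "f \<sigma> = \<sigma>" "\<And>x. f x = x \<Longrightarrow> x = \<sigma>" by blast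
  have sH: "\<sigma> \<in> HYs" using sg(1) Gam_HY[OF y P_HY] unfolding f_def by metis
  have sfix: "Gam a y \<sigma> = \<sigma>" using sg(1) P_id[OF sH] unfolding f_def by simp
  define v where "v = R (y + \<sigma>)"
  have vH: "v \<in> HXs" unfolding v_def using y sH by (intro res_H[OF r ml] HY_add)
  have Lv: "L v - mu *\<^sub>R incl v = y + \<sigma>" unfolding v_def by (rule res_eqs(1)[OF r])
  have "\<sigma> = P (L v - DF a v) - mu *\<^sub>R incl v" using sfix unfolding Gam_def v_def by simp
  then have "L v - mu *\<^sub>R incl v = y + (L v - P (DF a v)) - mu *\<^sub>R incl v" using Lv
    by (simp add: P_lin P_id L_HX[OF vH])
  then have pv: "P (DF a v) = y" by (simp add: algebra_simps)
  have uniq: "v' = v" if "v' \<in> HXs" "P (DF a v') = y" for v'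
  proof -
    note sc = sol_char[OF y that]
    have "f (L v' - y - mu *\<^sub>R incl v') = L v' - y - mu *\<^sub>R incl v'" unfolding f_def using sc(1) P_id[OF sc(3)] by simp
    then have "L v' - y - mu *\<^sub>R incl v' = \<sigma>" by (rule sg(2))
    then show ?thesis using sc(2) v_def by simp
  qed
  show ?thesis using vH pv uniq by blast
qed

definition Jop :: "'a \<Rightarrow> 'b \<Rightarrow> 'a" where
  "Jop a y = (THE v. v \<in> HXs \<and> P (DF a v) = P y)"

lemma Jop_prop: "Jop a y \<in> HXs" "P (DF a (Jop a y)) = P y"
  using theI'[OF lin_ex[OF P_HY, of a y]] unfolding Jop_def by auto

lemma Jop_unique: "v \<in> HXs \<Longrightarrow> P (DF a v) = P y \<Longrightarrow> v = Jop a y"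
  using the1_equality[OF lin_ex[OF P_HY, of a y]] unfolding Jop_def by auto

lemma Jop_bl: "bounded_linear (Jop a)"
proof (rule bounded_linear_intro[of _ CJ])
  fix y1 y2
  show "Jop a (y1 + y2) = Jop a y1 + Jop a y2"
    by (rule Jop_unique[symmetric]) (auto simp: HX_add Jop_prop blinfun.add_right P_lin)
next
  fix c y
  show "Jop a (c *\<^sub>R y) = c *\<^sub>R Jop a y"
    by (rule Jop_unique[symmetric]) (auto simp: HX_scale Jop_prop blinfun.scaleR_right P_lin)
next
  fix y
  have "norm (Jop a y) \<le> CJ * norm (P y)" by (rule sol_bound[OF P_HY Jop_prop])
  also have "\<dots> \<le> CJ * norm y" using CJ_pos P_norm by (intro mult_left_mono) auto
  finally show "norm (Jop a y) \<le> norm y * CJ" by (simp add: mult.commute)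
qed

lemma NI_cont: "isCont (\<lambda>b. N (incl b)) b"
  using has_derivative_continuous[OF NI_deriv[of b]] .

lemma fw_cont:
  assumes z: "z \<in> HYs"
  shows "((\<lambda>t. fw z t) \<longlongrightarrow> fw z t0) (at t0)"
proof -
  define x where "x = (\<lambda>t. incl (fw z t))"
  have xH: "x t \<in> HYs" for t unfolding x_def using fw_prop(1)[OF z] HX_iff by auto
  have xfix: "Phi z t (x t) = x t" for t unfolding x_def by (rule fw_fix(2)[OF z])
  define g where "g = (\<lambda>t. P (N (x t0 + t *\<^sub>R ph)))"
  have gc: "isCont g t0"
  proof -
    have e: "g = (\<lambda>t. P (N (incl (fw z t0 + t *\<^sub>R phi))))" unfolding g_def x_def by (simp add: incl_lin)
    have c1: "isCont (\<lambda>t. fw z t0 + t *\<^sub>R phi) t0" by (intro continuous_intros)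
    have c2: "isCont (\<lambda>t. N (incl (fw z t0 + t *\<^sub>R phi))) t0" by (rule isCont_o2[OF c1 NI_cont])
    have c3: "isCont P (N (incl (fw z t0 + t0 *\<^sub>R phi)))" by (rule linear_continuous_at[OF bl_P])
    show ?thesis unfolding e by (rule isCont_o2[OF c2 c3])
  qed
  have gl: "(g \<longlongrightarrow> g t0) (at t0)" using gc unfolding isCont_def .
  have ineq: "norm (x t - x t0) \<le> (\<kappa> / (1 - q)) * norm (g t - g t0)" for t
  proof -
    have gH: "g t - g t0 \<in> HYs" unfolding g_def by (intro HY_diff P_HY)
    have e2: "Phi z t (x t0) - Phi z t0 (x t0) = incl (R (g t - g t0))"
      unfolding Phi_def g_def by (simp add: TR_lin[symmetric] algebra_simps)
    have "x t - x t0 = (Phi z t (x t) - Phi z t (x t0)) + (Phi z t (x t0) - Phi z t0 (x t0))"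
      using xfix[of t] xfix[of t0] by simp
    then have "norm (x t - x t0) \<le> norm (Phi z t (x t) - Phi z t (x t0)) + norm (incl (R (g t - g t0)))"
      using norm_triangle_ineq e2 by metis
    also have "\<dots> \<le> q * norm (x t - x t0) + \<kappa> * norm (g t - g t0)"
      by (intro add_mono Phi_contr xH kb gH)
    finally have "(1 - q) * norm (x t - x t0) \<le> \<kappa> * norm (g t - g t0)" by (simp add: algebra_simps)
    then show ?thesis using q1 by (simp add: field_simps)
  qed
  have gd: "((\<lambda>t. g t - g t0) \<longlongrightarrow> 0) (at t0)" using tendsto_diff[OF gl tendsto_const[of "g t0"]] by simp
  have xd: "((\<lambda>t. x t - x t0) \<longlongrightarrow> 0) (at t0)"
  proof (rule Lim_null_comparison)
    show "\<forall>\<^sub>F t in at t0. norm (x t - x t0) \<le> (\<kappa> / (1 - q)) * norm (g t - g t0)" using ineq by simp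
    show "((\<lambda>t. (\<kappa> / (1 - q)) * norm (g t - g t0)) \<longlongrightarrow> 0) (at t0)"
      using tendsto_mult_right_zero[OF tendsto_norm_zero[OF gd], of "\<kappa> / (1 - q)"] by simp
  qed
  have xl: "(x \<longlongrightarrow> x t0) (at t0)" using tendsto_add[OF xd tendsto_const[of "x t0"]] by simp
  have pd: "((\<lambda>t. P (N (x t + t *\<^sub>R ph)) - g t) \<longlongrightarrow> 0) (at t0)"
  proof (rule Lim_null_comparison)
    show "\<forall>\<^sub>F t in at t0. norm (P (N (x t + t *\<^sub>R ph)) - g t) \<le> n * norm (x t - x t0)"
      unfolding g_def using lipP[OF xH xH] by simp
    show "((\<lambda>t. n * norm (x t - x t0)) \<longlongrightarrow> 0) (at t0)"
      using tendsto_mult_right_zero[OF tendsto_norm_zero[OF xd]] by simp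
  qed
  have pl: "((\<lambda>t. P (N (x t + t *\<^sub>R ph))) \<longlongrightarrow> g t0) (at t0)"
    using tendsto_add[OF pd gl] by simp
  have al: "((\<lambda>t. z + P (N (x t + t *\<^sub>R ph)) - mu *\<^sub>R x t) \<longlongrightarrow> z + g t0 - mu *\<^sub>R x t0) (at t0)"
    by (intro tendsto_intros pl xl)
  have Rl: "((\<lambda>t. R (z + P (N (x t + t *\<^sub>R ph)) - mu *\<^sub>R x t)) \<longlongrightarrow> R (z + g t0 - mu *\<^sub>R x t0)) (at t0)"
    by (rule bounded_linear.tendsto[OF res_bl[OF r] al])
  have "(\<lambda>t. R (z + P (N (x t + t *\<^sub>R ph)) - mu *\<^sub>R x t)) = (\<lambda>t. fw z t)"
    unfolding x_def using fw_fix(1)[OF z] by (metis)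
  moreover have "R (z + g t0 - mu *\<^sub>R x t0) = fw z t0"
    unfolding g_def x_def using fw_fix(1)[OF z, of t0] by simp
  ultimately show ?thesis using Rl by simp
qed

lemma Jop_bound: "norm (Jop a y) \<le> CJ * norm y"
proof -
  have "norm (Jop a y) \<le> CJ * norm (P y)" by (rule sol_bound[OF P_HY Jop_prop])
  also have "\<dots> \<le> CJ * norm y" using CJ_pos P_norm by (intro mult_left_mono) auto
  finally show ?thesis .
qed

lemma fw_deriv:
  assumes z: "z \<in> HYs"
  shows "((\<lambda>t. fw z t) has_derivative (\<lambda>h. h *\<^sub>R (- Jop (fw z t0 + t0 *\<^sub>R phi) (DF (fw z t0 + t0 *\<^sub>R phi) phi)))) (at t0)"
proof -
  define a0 where "a0 = fw z t0 + t0 *\<^sub>R phi"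
  define A where "A = DF a0"
  define wd where "wd = - Jop a0 (A phi)"
  define w where "w = (\<lambda>t. fw z t)"
  define u where "u = (\<lambda>t. w t + t *\<^sub>R phi)"
  have wdH: "wd \<in> HXs" unfolding wd_def using Jop_prop(1) HX_scale[of _ "-1"] by simp
  have Pwd: "P (A wd) = - P (A phi)" unfolding wd_def A_def using Jop_prop(2)[of a0 "DF a0 phi"]
    by (simp add: blinfun.minus_right P_lin)
  have ua0: "u t0 = a0" unfolding u_def w_def a0_def ..
  have PFu: "P (F (u t)) = z" for t unfolding u_def w_def by (rule fw_prop(2)[OF z])
  have wH: "w t \<in> HXs" for t unfolding w_def by (rule fw_prop(1)[OF z])
  define B where "B = norm wd + norm phi"
  have B0: "B \<ge> 0" unfolding B_def by simp
  have ul: "(u \<longlongrightarrow> a0) (at t0)"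
  proof -
    have "((\<lambda>t. w t + t *\<^sub>R phi) \<longlongrightarrow> w t0 + t0 *\<^sub>R phi) (at t0)"
      unfolding w_def by (intro tendsto_intros fw_cont[OF z])
    then show ?thesis unfolding u_def a0_def w_def .
  qed
  show ?thesis
    unfolding has_derivative_at_alt unfolding a0_def[symmetric] unfolding A_def[symmetric]
    unfolding wd_def[symmetric] unfolding w_def[symmetric]
  proof (intro conjI allI impI bounded_linear_scaleR_left)
    fix \<epsilon> :: real assume ep: "\<epsilon> > 0"
    define \<epsilon>1 where "\<epsilon>1 = min (1/(2 * CJ)) (\<epsilon>/(2 * CJ * B + 1))"
    have "2 * CJ * B \<ge> 0" using CJ_pos B0 by simp
    then have "2 * CJ * B + 1 > 0" by linarith
    then have e1p: "\<epsilon>1 > 0" unfolding \<epsilon>1_def using CJ_pos ep by simp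
    obtain d1 where d1: "d1 > 0" "\<And>b. norm (b - a0) < d1 \<Longrightarrow> norm (F b - F a0 - A (b - a0)) \<le> \<epsilon>1 * norm (b - a0)"
      using deriv[of a0] e1p unfolding has_derivative_at_alt A_def by blast
    have "eventually (\<lambda>t. dist (u t) a0 < d1) (at t0)" using ul d1(1) unfolding tendsto_iff by blast
    then obtain d2 where d2: "d2 > 0" "\<And>t. t \<noteq> t0 \<Longrightarrow> dist t t0 < d2 \<Longrightarrow> dist (u t) a0 < d1"
      unfolding eventually_at by auto
    show "\<exists>d>0. \<forall>t. norm (t - t0) < d \<longrightarrow> norm (w t - w t0 - (t - t0) *\<^sub>R wd) \<le> \<epsilon> * norm (t - t0)"
    proof (intro exI[of _ d2] conjI allI impI d2(1))
      fix t assume tt: "norm (t - t0) < d2"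
      show "norm (w t - w t0 - (t - t0) *\<^sub>R wd) \<le> \<epsilon> * norm (t - t0)"
      proof (cases "t = t0")
        case True then show ?thesis by simp
      next
        case False
        have un: "norm (u t - a0) < d1" using d2(2)[OF False] tt by (simp add: dist_norm)
        define E where "E = w t - w t0 - (t - t0) *\<^sub>R wd"
        define rr where "rr = F (u t) - F a0 - A (u t - a0)"
        have rb: "norm rr \<le> \<epsilon>1 * norm (u t - a0)" unfolding rr_def by (rule d1(2)[OF un])
        have EH: "E \<in> HXs" unfolding E_def using wH wdH by (intro HX_diff HX_scale)
        have ud: "u t - a0 = E + (t - t0) *\<^sub>R (wd + phi)"
          unfolding E_def u_def a0_def w_def by (simp add: algebra_simps)
        have "P (A (u t - a0)) = P (A E) + (t - t0) *\<^sub>R (P (A wd) + P (A phi))"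
          unfolding ud by (simp add: blinfun.add_right blinfun.scaleR_right P_lin)
        also have "\<dots> = P (A E)" using Pwd by simp
        finally have PA: "P (A (u t - a0)) = P (A E)" .
        have "P rr = P (F (u t)) - P (F a0) - P (A (u t - a0))" unfolding rr_def by (simp add: P_lin)
        also have "\<dots> = - P (A E)" using PFu[of t] PFu[of t0] ua0 PA by simp
        finally have "P (A E) = P (- rr)" by (simp add: P_lin)
        then have "E = Jop a0 (- rr)" using Jop_unique[OF EH] unfolding A_def by blast
        then have nE: "norm E \<le> CJ * norm rr" using Jop_bound[of a0 "- rr"] by simp
        have nu: "norm (u t - a0) \<le> norm E + \<bar>t - t0\<bar> * B"
          unfolding ud B_def using norm_triangle_ineq[of E "(t - t0) *\<^sub>R (wd + phi)"]
            norm_triangle_ineq[of wd phi] by (smt (verit) abs_ge_zero mult_left_mono norm_scaleR)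
        have c1: "CJ * \<epsilon>1 \<le> 1/2" unfolding \<epsilon>1_def using CJ_pos
          by (simp add: min_def field_simps)
        have c2: "2 * CJ * \<epsilon>1 * B \<le> \<epsilon>"
        proof -
          have "\<epsilon>1 \<le> \<epsilon>/(2 * CJ * B + 1)" unfolding \<epsilon>1_def by simp
          moreover have "2 * CJ * B + 1 > 0" using CJ_pos B0
            by (metis add_nonneg_pos mult_nonneg_nonneg less_imp_le zero_less_one zero_le_numeral)
          ultimately have "\<epsilon>1 * (2 * CJ * B + 1) \<le> \<epsilon>" by (simp add: pos_le_divide_eq)
          then show ?thesis using e1p by (simp add: algebra_simps)
        qed
        have "norm E \<le> CJ * (\<epsilon>1 * (norm E + \<bar>t - t0\<bar> * B))"
          using nE rb nu CJ_pos e1p by (smt (verit) mult_left_mono)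
        then have "norm E \<le> (CJ * \<epsilon>1) * norm E + (CJ * \<epsilon>1) * (\<bar>t - t0\<bar> * B)" by (simp add: algebra_simps)
        then have "(1 - CJ * \<epsilon>1) * norm E \<le> (CJ * \<epsilon>1) * (\<bar>t - t0\<bar> * B)" by (simp add: algebra_simps)
        moreover have "(1/2) * norm E \<le> (1 - CJ * \<epsilon>1) * norm E" using c1 by (intro mult_right_mono) auto
        ultimately have "norm E \<le> 2 * CJ * \<epsilon>1 * B * \<bar>t - t0\<bar>" by (simp add: algebra_simps)
        also have "\<dots> \<le> \<epsilon> * \<bar>t - t0\<bar>" using c2 by (intro mult_right_mono) auto
        finally show ?thesis unfolding E_def by simp
      qed
    qed
  qed
qed

lemma final:
  assumes z: "z \<in> HYs"
  shows "(\<not> invertible_op (DF (fiber_u incl L N phi z t0)) \<longleftrightarrow>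
            ((\<lambda>t. height incl L N phi (fiber_u incl L N phi z t)) has_real_derivative 0) (at t0))"
proof -
  define a0 where "a0 = fw z t0 + t0 *\<^sub>R phi"
  define A where "A = DF a0"
  define wd where "wd = - Jop a0 (A phi)"
  define ud where "ud = wd + phi"
  define hd where "hd = inner (A ud) ph"
  have fu: "fiber_u incl L N phi z t = fw z t + t *\<^sub>R phi" for t unfolding fiber_u_def fw_def ..
  have a0e: "fiber_u incl L N phi z t0 = a0" unfolding fu a0_def ..
  have wdH: "wd \<in> HXs" unfolding wd_def using Jop_prop(1) HX_scale[of _ "-1"] by simp
  have Pwd: "P (A wd) = - P (A phi)" unfolding wd_def A_def using Jop_prop(2)[of a0 "DF a0 phi"]
    by (simp add: blinfun.minus_right P_lin)
  have du: "((\<lambda>t. fiber_u incl L N phi z t) has_derivative (\<lambda>h. h *\<^sub>R ud)) (at t0)"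
  proof -
    have "((\<lambda>t. fw z t + t *\<^sub>R phi) has_derivative (\<lambda>h. h *\<^sub>R wd + h *\<^sub>R phi)) (at t0)"
      using fw_deriv[OF z, of t0] unfolding wd_def A_def a0_def
      by (intro has_derivative_add) (auto intro!: derivative_eq_intros)
    then show ?thesis unfolding fu ud_def by (simp add: scaleR_right_distrib)
  qed
  have dF: "(F has_derivative A) (at ((\<lambda>t. fiber_u incl L N phi z t) t0))" unfolding a0e A_def by (rule deriv)
  have dFu: "((\<lambda>t. F (fiber_u incl L N phi z t)) has_derivative (\<lambda>h. A (h *\<^sub>R ud))) (at t0)"
    using diff_chain_at[OF du dF] by (simp add: o_def)
  have dh: "((\<lambda>t. height incl L N phi (fiber_u incl L N phi z t)) has_derivative (\<lambda>h. inner (A (h *\<^sub>R ud)) ph)) (at t0)"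
    unfolding height_def by (rule bounded_linear.has_derivative[OF bounded_linear_inner_left dFu])
  have "(\<lambda>h. inner (A (h *\<^sub>R ud)) ph) = (*) hd" unfolding hd_def
    by (rule ext) (simp add: blinfun.scaleR_right)
  then have dh': "((\<lambda>t. height incl L N phi (fiber_u incl L N phi z t)) has_real_derivative hd) (at t0)"
    using dh unfolding has_field_derivative_def by simp
  have rhs: "((\<lambda>t. height incl L N phi (fiber_u incl L N phi z t)) has_real_derivative 0) (at t0) \<longleftrightarrow> hd = 0"
    using dh' DERIV_unique by blast
  have PAud: "P (A ud) = 0" unfolding ud_def using Pwd by (simp add: blinfun.add_right P_lin)
  have Aud: "A ud = hd *\<^sub>R ph" using decomp[of "A ud"] PAud unfolding hd_def by simp
  have iud: "inner (incl ud) ph = 1" unfolding ud_def using wdH phph by (simp add: incl_lin inner_add_left HX_def)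
  have inj: "b = 0" if Ab: "A b = 0" and hd0: "hd \<noteq> 0" for b
  proof -
    define c where "c = inner (incl b) ph"
    define b' where "b' = b - c *\<^sub>R phi"
    have b'H: "b' \<in> HXs" unfolding b'_def c_def HX_def by (simp add: incl_lin inner_diff_left phph)
    have "P (A (b' - c *\<^sub>R wd)) = P (A b) - c *\<^sub>R P (A phi) - c *\<^sub>R P (A wd)"
      unfolding b'_def by (simp add: blinfun.diff_right blinfun.scaleR_right P_lin)
    also have "\<dots> = P 0" using Ab Pwd by (simp add: P_lin)
    finally have e0: "P (A (b' - c *\<^sub>R wd)) = P 0" .
    have H0: "b' - c *\<^sub>R wd \<in> HXs" using b'H wdH by (intro HX_diff HX_scale)
    have "b' - c *\<^sub>R wd = Jop a0 0" using Jop_unique[OF H0] e0 unfolding A_def by blast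
    also have "Jop a0 0 = 0" using linear_0[OF bounded_linear.linear[OF Jop_bl]] .
    finally have "b = c *\<^sub>R ud" unfolding b'_def ud_def by (simp add: algebra_simps)
    then have "A b = (c * hd) *\<^sub>R ph" using Aud by (simp add: blinfun.scaleR_right)
    then have "c * hd = 0" using Ab phin by (metis norm_zero scaleR_eq_0_iff zero_neq_one)
    then have "c = 0" using hd0 by simp
    then show ?thesis using \<open>b = c *\<^sub>R ud\<close> by simp
  qed
  have lhs: "invertible_op A \<longleftrightarrow> hd \<noteq> 0"
  proof
    assume "invertible_op A"
    then obtain S :: "'b \<Rightarrow>\<^sub>L 'a" where S: "\<And>a. S (A a) = a" unfolding invertible_op_def by blast
    show "hd \<noteq> 0"
    proof
      assume "hd = 0"
      then have "A ud = 0" using Aud by simp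
      then have "ud = 0" using S[of ud] by (simp add: blinfun.zero_right)
      then show False using iud by (simp add: incl_lin)
    qed
  next
    assume hd0: "hd \<noteq> 0"
    define S where "S = (\<lambda>y. Jop a0 y + ((inner y ph - inner (A (Jop a0 y)) ph) / hd) *\<^sub>R ud)"
    interpret J: bounded_linear "Jop a0" by (rule Jop_bl)
    have b1: "bounded_linear (\<lambda>x. inner (A x) ph)"
      using bounded_linear_compose[OF bounded_linear_inner_left[of ph] blinfun.bounded_linear_right[of A]] by simp
    have b2: "bounded_linear (\<lambda>y. inner (A (Jop a0 y)) ph)"
      using bounded_linear_compose[OF b1 J.bounded_linear_axioms] by simp
    have b3: "bounded_linear (\<lambda>y. (inner y ph - inner (A (Jop a0 y)) ph) / hd)"
      using bounded_linear_compose[OF bounded_linear_divide[of hd] bounded_linear_sub[OF bounded_linear_inner_left[of ph] b2]] by simp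
    have b4: "bounded_linear (\<lambda>y. ((inner y ph - inner (A (Jop a0 y)) ph) / hd) *\<^sub>R ud)"
      by (rule bounded_linear_scaleR_const[OF b3])
    have blS: "bounded_linear S" unfolding S_def
      by (rule bounded_linear_add[OF J.bounded_linear_axioms b4])
    have AS: "A (S y) = y" for y
    proof -
      define j where "j = A (Jop a0 y)"
      have Pj: "P j = P y" unfolding j_def A_def by (rule Jop_prop(2))
      have "A (S y) = j + ((inner y ph - inner j ph) / hd) *\<^sub>R A ud"
        unfolding S_def j_def by (simp add: blinfun.add_right blinfun.scaleR_right)
      also have "\<dots> = j + (inner y ph - inner j ph) *\<^sub>R ph" using hd0 Aud by simp
      also have "\<dots> = (j - inner j ph *\<^sub>R ph) + inner y ph *\<^sub>R ph" by (simp add: algebra_simps)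
      also have "j - inner j ph *\<^sub>R ph = P y" using Pj P_eq[of j] by simp
      also have "P y + inner y ph *\<^sub>R ph = y" using decomp[of y] by simp
      finally show ?thesis .
    qed
    have SA: "S (A x) = x" for x
    proof -
      have "A (S (A x) - x) = 0" using AS[of "A x"] by (simp add: blinfun.diff_right)
      then show ?thesis using inj hd0 by fastforce
    qed
    show "invertible_op A" unfolding invertible_op_def
      using SA AS bounded_linear_Blinfun_apply[OF blS] by (intro exI[of _ "Blinfun S"]) simp
  qed
  show ?thesis unfolding a0e rhs using lhs unfolding A_def by simp
qed

end


theorem mainTheorem5:
  fixes incl :: "'x::{real_inner,complete_space} \<Rightarrow> 'y::{real_inner,complete_space}"
    and L :: "'x \<Rightarrow> 'y" and N :: "'y \<Rightarrow> 'y"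
    and lam :: real and phi :: "'x"
    and DF :: "'x \<Rightarrow> ('x \<Rightarrow>\<^sub>L 'y)"
    and z0 :: 'y and t0 :: real
  assumes setting: "graph_norm_setting incl L"
    and selfadj: "self_adjoint_op incl L"
    and eig: "simple_isolated_eigenvalue incl L lam phi"
    and C1_deriv: "\<forall>a. (Fop incl L N has_derivative blinfun_apply (DF a)) (at a)"
    and C1_cont: "continuous_on UNIV DF"
    and H: "hypH incl L N lam phi"
    and z0: "z0 \<in> HY (incl phi)"
  shows "(\<not> invertible_op (DF (fiber_u incl L N phi z0 t0)) \<longleftrightarrow>
            ((\<lambda>t. height incl L N phi (fiber_u incl L N phi z0 t)) has_real_derivative 0) (at t0))
       \<and> (\<not> invertible_op (DF (fiber_u incl L N phi z0 t0)) \<longleftrightarrow>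
            ((\<lambda>t. adapted_height incl L N phi z0 t) has_real_derivative 0) (at t0))"
proof -
  have st: "linear incl" "inj incl" "linear L" "\<And>a b. inner a b = inner (incl a) (incl b) + inner (L a) (L b)"
    using setting unfolding graph_norm_setting_def by auto
  have sy: "\<And>a b. inner (L a) (incl b) = inner (incl a) (L b)"
  proof -
    fix a b
    have "\<forall>a. inner (L a) (incl b) = inner (incl a) (L b)"
      using selfadj unfolding self_adjoint_op_def by blast
    then show "inner (L a) (incl b) = inner (incl a) (L b)" by blast
  qed
  obtain e where ei: "L phi = lam *\<^sub>R incl phi" "norm (incl phi) = 1"
    "\<And>a. L a = lam *\<^sub>R incl a \<Longrightarrow> \<exists>c. a = c *\<^sub>R phi" "e > 0"
    "\<And>mu. mu \<in> op_spectrum incl L \<Longrightarrow> \<bar>mu - lam\<bar> < e \<Longrightarrow> mu = lam"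
    using eig unfolding simple_isolated_eigenvalue_def by blast
  obtain n where hn: "n \<ge> 0" "\<And>t. n-lipschitz_on (HY (incl phi)) (\<lambda>w. projP (incl phi) (N (w + t *\<^sub>R incl phi)))"
    "{-n..n} \<inter> op_spectrum incl L = {lam}"
    using H unfolding hypH_def by blast
  interpret S: spec incl L lam phi n e
  proof (rule spec.intro)
    show "linear incl" by (rule st(1))
    show "inj incl" by (rule st(2))
    show "linear L" by (rule st(3))
    show "\<And>a b. inner a b = inner (incl a) (incl b) + inner (L a) (L b)" by (rule st(4))
    show "\<And>a b. inner (L a) (incl b) = inner (incl a) (L b)" by (rule sy)
    show "L phi = lam *\<^sub>R incl phi" by (rule ei(1))
    show "norm (incl phi) = 1" by (rule ei(2))
    show "\<And>a. L a = lam *\<^sub>R incl a \<Longrightarrow> \<exists>c. a = c *\<^sub>R phi" by (rule ei(3))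
    show "e > 0" by (rule ei(4))
    show "\<And>mu. mu \<in> op_spectrum incl L \<Longrightarrow> \<bar>mu - lam\<bar> < e \<Longrightarrow> mu = lam" by (rule ei(5))
    show "n \<ge> 0" by (rule hn(1))
    show "{-n..n} \<inter> op_spectrum incl L = {lam}" by (rule hn(3))
  qed
  obtain mu R \<kappa> where sp: "S.res mu R" "mu \<noteq> lam" "\<kappa> \<ge> 0" "\<kappa> * (n + \<bar>mu\<bar>) < 1"
    "\<And>y. y \<in> HY (incl phi) \<Longrightarrow> norm (incl (R y)) \<le> \<kappa> * norm y"
    using S.SP by blast
  interpret FR: fullR incl L lam phi n e N DF mu R \<kappa>
  proof (intro fullR.intro fullR_axioms.intro S.spec_axioms)
    show "\<And>t. n-lipschitz_on (HY (incl phi)) (\<lambda>w. projP (incl phi) (N (w + t *\<^sub>R incl phi)))" by (rule hn(2))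
    show "\<And>a. (Fop incl L N has_derivative blinfun_apply (DF a)) (at a)" using C1_deriv by blast
    show "S.res mu R" by (rule sp(1))
    show "mu \<noteq> lam" by (rule sp(2))
    show "\<kappa> \<ge> 0" by (rule sp(3))
    show "\<kappa> * (n + \<bar>mu\<bar>) < 1" by (rule sp(4))
    show "\<And>y. y \<in> HY (incl phi) \<Longrightarrow> norm (incl (R y)) \<le> \<kappa> * norm y" by (rule sp(5))
  qed
  have A: "(\<not> invertible_op (DF (fiber_u incl L N phi z0 t0)) \<longleftrightarrow>
            ((\<lambda>t. height incl L N phi (fiber_u incl L N phi z0 t)) has_real_derivative 0) (at t0))"
    by (rule FR.final[OF z0])
  have eqf: "(\<lambda>t. adapted_height incl L N phi z0 t) = (\<lambda>t. height incl L N phi (fiber_u incl L N phi z0 t))"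
    unfolding adapted_height_def ..
  show ?thesis using A unfolding eqf by simp
qed

end
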